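(* Let $\mathcal H$ be an infinite-dimensional complex Hilbert space. Then the set $\mathcal R_f(\mathcal H)$ of regular forms in $\mathcal V_f(\mathcal H)$ and the set $\mathcal S_f(\mathcal H)$ of singular forms in $\mathcal V_f(\mathcal H)$ are sub-generalized effect algebras of the generalized effect algebra $(\mathcal V_f(\mathcal H);\overline\oplus,o)$.
   Context: Bilinear forms $t$ on $\mathcal H$ are sesquilinear maps $D(t)\times D(t)\to\mathbb C$ on a dense linear subspace $D(t)$ (linear in the first argument); $t$ is positive if $t(x,x)\ge0$ on $D(t)$, bounded if $\sup\{t(x,x)\mid x\in D(t),\|x\|=1\}<\infty$. The sum $t+s$ has domain $D(t)\cap D(s)$. $o$ is the zero form on $\mathcal H$. $\mathcal V_f(\mathcal H)$ is the set of positive bilinear forms with dense domain such that $D(t)=\mathcal H$ whenever $t$ is bounded; $t\oplus s$ is defined iff $t$ or $s$ is bounded or $D(t)=D(s)$, and then $t\oplus s=t+s$. A positive form is closed if $D(t)$ is a Hilbert space under $(x,y)_t=t(x,y)+(1+m_t)(x,y)$, $m_t=\inf\{t(x,x)\mid x\in D(t),\|x\|=1\}$; closable if it has a closed extension. For a positive form $t$, the regular part $t_r$ is the largest closable positive form with domain $D(t)$ satisfying $t_r(x,x)\le t(x,x)$ for all $x\in D(t)$, and the singular part is $t_s=t-t_r$; $t$ is regular if $t_s=0$ and singular if $t_r=0$. The operation $\overline\oplus$: $t\,\overline\oplus\,s$ is defined iff $t\oplus s$ is defined and $(t+s)_r=t_r+s_r$, and then equals $t+s$; $(\mathcal V_f(\mathcal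 H);\overline\oplus,o)$ is a generalized effect algebra. A subset $Q$ of a generalized effect algebra $(E;\oplus,0)$ is a sub-generalized effect algebra if $0\in Q$ and whenever $x\oplus y=z$ in $E$ with two of $x,y,z$ in $Q$, all three are in $Q$. *)

theory Defs
  imports "HOL-Analysis.Analysis"
begin

class complex_inner = ab_group_add +
  fixes scaleC :: "complex \<Rightarrow> 'a \<Rightarrow> 'a"
    and cinner :: "'a \<Rightarrow> 'a \<Rightarrow> complex"
  assumes scaleC_add_right: "scaleC a (x + y) = scaleC a x + scaleC a y"
    and scaleC_add_left: "scaleC (a + b) x = scaleC a x + scaleC b x"
    and scaleC_scaleC: "scaleC a (scaleC b x) = scaleC (a * b) x"
    and scaleC_one: "scaleC 1 x = x"
    and cinner_add_left: "cinner (x + y) z = cinner x z + cinner y z"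
    and cinner_scaleC_left: "cinner (scaleC a x) y = a * cinner x y"
    and cinner_cnj_commute: "cinner y x = cnj (cinner x y)"
    and cinner_nonneg: "0 \<le> Re (cinner x x)"
    and cinner_eq_zero: "cinner x x = 0 \<Longrightarrow> x = 0"

definition hnorm :: "'a::complex_inner \<Rightarrow> real" where
  "hnorm x = sqrt (Re (cinner x x))"

class chilbert = complex_inner +
  assumes hilbert_complete:
    "(\<forall>e>0. \<exists>N::nat. \<forall>m\<ge>N. \<forall>n\<ge>N. sqrt (Re (cinner (X m - X n) (X m - X n))) < e)
     \<Longrightarrow> (\<exists>L::'a. \<forall>e>0. \<exists>N::nat. \<forall>n\<ge>N. sqrt (Re (cinner (X n - L) (X n - L))) < e)"

definition cspan :: "'a::complex_inner set \<Rightarrow> 'a set" where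
  "cspan S = {x. \<exists>F c. finite F \<and> F \<subseteq> S \<and> x = (\<Sum>v\<in>F. scaleC (c v) v)}"

definition infinite_dimensional :: "'a::complex_inner set \<Rightarrow> bool" where
  "infinite_dimensional H \<longleftrightarrow> (\<forall>S. finite S \<and> S \<subseteq> H \<longrightarrow> cspan S \<noteq> H)"

definition lin_subspace :: "'a::complex_inner set \<Rightarrow> bool" where
  "lin_subspace D \<longleftrightarrow> 0 \<in> D \<and> (\<forall>x\<in>D. \<forall>y\<in>D. x + y \<in> D) \<and> (\<forall>a. \<forall>x\<in>D. scaleC a x \<in> D)"

definition dense_set :: "'a::complex_inner set \<Rightarrow> bool" where
  "dense_set D \<longleftrightarrow> (\<forall>x. \<forall>e>0. \<exists>y\<in>D. hnorm (x - y) < e)"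

text \<open>A form is a pair (domain, values). Convention: values outside D(t) x D(t) are 0,
  so that equality of pairs is equality of forms.\<close>
type_synonym 'a sform = "'a set \<times> ('a \<Rightarrow> 'a \<Rightarrow> complex)"

definition fdom :: "'a sform \<Rightarrow> 'a set" where "fdom t = fst t"
definition fval :: "'a sform \<Rightarrow> 'a \<Rightarrow> 'a \<Rightarrow> complex" where "fval t = snd t"

definition is_sesq_form :: "'a::complex_inner sform \<Rightarrow> bool" where
  "is_sesq_form t \<longleftrightarrow> lin_subspace (fdom t)
    \<and> (\<forall>x\<in>fdom t. \<forall>y\<in>fdom t. \<forall>z\<in>fdom t.
         fval t (x + y) z = fval t x z + fval t y z \<and> fval t z (x + y) = fval t z x + fval t z y)
    \<and> (\<forall>a. \<forall>x\<in>fdom t. \<forall>y\<in>fdom t.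
         fval t (scaleC a x) y = a * fval t x y \<and> fval t x (scaleC a y) = cnj a * fval t x y)
    \<and> (\<forall>x y. \<not> (x \<in> fdom t \<and> y \<in> fdom t) \<longrightarrow> fval t x y = 0)"

text \<open>Bilinear form in the paper's sense: sesquilinear on a dense linear subspace.\<close>
definition bilinear_form :: "'a::complex_inner sform \<Rightarrow> bool" where
  "bilinear_form t \<longleftrightarrow> is_sesq_form t \<and> dense_set (fdom t)"

definition positive_form :: "'a::complex_inner sform \<Rightarrow> bool" where
  "positive_form t \<longleftrightarrow> (\<forall>x\<in>fdom t. Im (fval t x x) = 0 \<and> 0 \<le> Re (fval t x x))"

definition bounded_form :: "'a::complex_inner sform \<Rightarrow> bool" where
  "bounded_form t \<longleftrightarrow> bdd_above {Re (fval t x x) | x. x \<in> fdom t \<and> hnorm x = 1}"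

definition zero_form :: "'a::complex_inner sform" where
  "zero_form = (UNIV, (\<lambda>x y. 0))"

definition form_add :: "'a::complex_inner sform \<Rightarrow> 'a sform \<Rightarrow> 'a sform" where
  "form_add t s = (fdom t \<inter> fdom s,
     (\<lambda>x y. if x \<in> fdom t \<inter> fdom s \<and> y \<in> fdom t \<inter> fdom s then fval t x y + fval s x y else 0))"

definition form_diff :: "'a::complex_inner sform \<Rightarrow> 'a sform \<Rightarrow> 'a sform" where
  "form_diff t s = (fdom t \<inter> fdom s,
     (\<lambda>x y. if x \<in> fdom t \<inter> fdom s \<and> y \<in> fdom t \<inter> fdom s then fval t x y - fval s x y else 0))"

definition is_zero_form :: "'a::complex_inner sform \<Rightarrow> bool" where
  "is_zero_form t \<longleftrightarrow> (\<forall>x\<in>fdom t. \<forall>y\<in>fdom t. fval t x y = 0)"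

definition Vf :: "'a::complex_inner sform set" where
  "Vf = {t. bilinear_form t \<and> positive_form t \<and> (bounded_form t \<longrightarrow> fdom t = UNIV)}"

definition oplus_defined :: "'a::complex_inner sform \<Rightarrow> 'a sform \<Rightarrow> bool" where
  "oplus_defined t s \<longleftrightarrow> bounded_form t \<or> bounded_form s \<or> fdom t = fdom s"

definition lower_bound_form :: "'a::complex_inner sform \<Rightarrow> real" where
  "lower_bound_form t = Inf {Re (fval t x x) | x. x \<in> fdom t \<and> hnorm x = 1}"

text \<open>Norm induced by (x,y)_t = t(x,y) + (1 + m_t)(x,y).\<close>
definition tnorm :: "'a::complex_inner sform \<Rightarrow> 'a \<Rightarrow> real" where
  "tnorm t x = sqrt (Re (fval t x x + complex_of_real (1 + lower_bound_form t) * cinner x x))"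

definition is_closed_form :: "'a::complex_inner sform \<Rightarrow> bool" where
  "is_closed_form t \<longleftrightarrow> positive_form t \<and>
    (\<forall>X::nat \<Rightarrow> 'a. (\<forall>n. X n \<in> fdom t) \<and> (\<forall>e>0. \<exists>N. \<forall>m\<ge>N. \<forall>n\<ge>N. tnorm t (X m - X n) < e)
      \<longrightarrow> (\<exists>L\<in>fdom t. \<forall>e>0. \<exists>N. \<forall>n\<ge>N. tnorm t (X n - L) < e))"

definition is_closable_form :: "'a::complex_inner sform \<Rightarrow> bool" where
  "is_closable_form t \<longleftrightarrow> (\<exists>s. is_sesq_form s \<and> positive_form s \<and> is_closed_form s \<and>
      fdom t \<subseteq> fdom s \<and> (\<forall>x\<in>fdom t. \<forall>y\<in>fdom t. fval s x y = fval t x y))"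

definition regular_candidates :: "'a::complex_inner sform \<Rightarrow> 'a sform set" where
  "regular_candidates t = {r. bilinear_form r \<and> positive_form r \<and> is_closable_form r \<and>
      fdom r = fdom t \<and> (\<forall>x\<in>fdom t. Re (fval r x x) \<le> Re (fval t x x))}"

definition regular_part :: "'a::complex_inner sform \<Rightarrow> 'a sform" where
  "regular_part t = (THE r. r \<in> regular_candidates t \<and>
      (\<forall>r'\<in>regular_candidates t. \<forall>x\<in>fdom t. Re (fval r' x x) \<le> Re (fval r x x)))"

definition singular_part :: "'a::complex_inner sform \<Rightarrow> 'a sform" where
  "singular_part t = form_diff t (regular_part t)"

definition regular_form :: "'a::complex_inner sform \<Rightarrow> bool" where
  "regular_form t \<longleftrightarrow> is_zero_form (singular_part t)"

definition singular_form :: "'a::complex_inner sform \<Rightarrow> bool" where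
  "singular_form t \<longleftrightarrow> is_zero_form (regular_part t)"

definition oplus_bar :: "'a::complex_inner sform \<Rightarrow> 'a sform \<Rightarrow> 'a sform option" where
  "oplus_bar t s = (if oplus_defined t s \<and>
        regular_part (form_add t s) = form_add (regular_part t) (regular_part s)
     then Some (form_add t s) else None)"

definition Rf :: "'a::complex_inner sform set" where
  "Rf = {t \<in> Vf. regular_form t}"

definition Sf :: "'a::complex_inner sform set" where
  "Sf = {t \<in> Vf. singular_form t}"

definition sub_gea :: "'b set \<Rightarrow> ('b \<Rightarrow> 'b \<Rightarrow> 'b option) \<Rightarrow> 'b \<Rightarrow> 'b set \<Rightarrow> bool" where
  "sub_gea E op z Q \<longleftrightarrow> Q \<subseteq> E \<and> z \<in> Q \<and>
    (\<forall>x\<in>E. \<forall>y\<in>E. \<forall>w\<in>E. op x y = Some w \<longrightarrow>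
       ((x \<in> Q \<and> y \<in> Q) \<or> (x \<in> Q \<and> w \<in> Q) \<or> (y \<in> Q \<and> w \<in> Q)) \<longrightarrow>
       x \<in> Q \<and> y \<in> Q \<and> w \<in> Q)"

end

theory Submission
  imports Defs
begin


lemma scaleC_zero_left [simp]: "scaleC 0 (x::'a::complex_inner) = 0"
proof -
  have "scaleC 0 x + scaleC 0 x = scaleC 0 x + 0"
    using scaleC_add_left[of 0 0 x] by simp
  thus ?thesis by (metis add_left_cancel)
qed

lemma scaleC_zero_right [simp]: "scaleC a (0::'a::complex_inner) = 0"
proof -
  have "scaleC a 0 + scaleC a 0 = scaleC a (0::'a) + 0"
    using scaleC_add_right[of a "0::'a" 0] by simp
  thus ?thesis by (metis add_left_cancel)
qed

lemma scaleC_minus_left: "scaleC (- a) (x::'a::complex_inner) = - scaleC a x"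
  using scaleC_add_left[of a "-a" x] by (simp add: eq_neg_iff_add_eq_0 add.commute)

lemma scaleC_minus_right: "scaleC a (- x::'a::complex_inner) = - scaleC a x"
  using scaleC_add_right[of a x "-x"] by (simp add: eq_neg_iff_add_eq_0 add.commute)

lemma scaleC_diff_right: "scaleC a (x - y::'a::complex_inner) = scaleC a x - scaleC a y"
  using scaleC_add_right[of a x "-y"] by (simp add: scaleC_minus_right)

lemma scaleC_diff_left: "scaleC (a - b) (x::'a::complex_inner) = scaleC a x - scaleC b x"
  using scaleC_add_left[of a "-b" x] by (simp add: scaleC_minus_left)

lemma scaleC_minus1: "scaleC (-1) (x::'a::complex_inner) = - x"
  by (simp add: scaleC_minus_left scaleC_one)

lemma cinner_add_right: "cinner (z::'a::complex_inner) (x + y) = cinner z x + cinner z y"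
  by (metis cinner_add_left cinner_cnj_commute complex_cnj_add)

lemma cinner_scaleC_right: "cinner (x::'a::complex_inner) (scaleC a y) = cnj a * cinner x y"
  by (metis cinner_scaleC_left cinner_cnj_commute complex_cnj_mult)

lemma cinner_self_real: "Im (cinner (x::'a::complex_inner) x) = 0"
proof -
  have "cinner x x = cnj (cinner x x)" by (rule cinner_cnj_commute)
  from arg_cong[OF this, of Im] show ?thesis by simp
qed

definition sesq_on :: "'a::complex_inner set \<Rightarrow> ('a \<Rightarrow> 'a \<Rightarrow> complex) \<Rightarrow> bool" where
  "sesq_on D f \<longleftrightarrow> lin_subspace D
    \<and> (\<forall>x\<in>D. \<forall>y\<in>D. \<forall>z\<in>D. f (x + y) z = f x z + f y z \<and> f z (x + y) = f z x + f z y)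
    \<and> (\<forall>a. \<forall>x\<in>D. \<forall>y\<in>D. f (scaleC a x) y = a * f x y \<and> f x (scaleC a y) = cnj a * f x y)"

definition pos_on :: "'a::complex_inner set \<Rightarrow> ('a \<Rightarrow> 'a \<Rightarrow> complex) \<Rightarrow> bool" where
  "pos_on D f \<longleftrightarrow> (\<forall>x\<in>D. Im (f x x) = 0 \<and> 0 \<le> Re (f x x))"

lemma sesq_form_on: "is_sesq_form t \<Longrightarrow> sesq_on (fdom t) (fval t)"
  unfolding is_sesq_form_def sesq_on_def by blast

lemma pos_form_on: "positive_form t \<Longrightarrow> pos_on (fdom t) (fval t)"
  unfolding positive_form_def pos_on_def by blast

lemma cinner_sesq: "sesq_on UNIV (cinner :: 'a::complex_inner \<Rightarrow> _)"
  unfolding sesq_on_def lin_subspace_def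
  by (simp add: cinner_add_left cinner_add_right cinner_scaleC_left cinner_scaleC_right)

lemma cinner_pos: "pos_on UNIV (cinner :: 'a::complex_inner \<Rightarrow> _)"
  unfolding pos_on_def by (simp add: cinner_self_real cinner_nonneg)

lemma subsp_0: "lin_subspace D \<Longrightarrow> 0 \<in> D"
  by (simp add: lin_subspace_def)
lemma subsp_add: "lin_subspace D \<Longrightarrow> x \<in> D \<Longrightarrow> y \<in> D \<Longrightarrow> x + y \<in> D"
  by (simp add: lin_subspace_def)
lemma subsp_scale: "lin_subspace D \<Longrightarrow> x \<in> D \<Longrightarrow> scaleC a x \<in> D"
  by (simp add: lin_subspace_def)
lemma subsp_neg: "lin_subspace D \<Longrightarrow> x \<in> D \<Longrightarrow> - x \<in> D"
  by (metis subsp_scale scaleC_minus1)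
lemma subsp_diff: "lin_subspace D \<Longrightarrow> x \<in> D \<Longrightarrow> y \<in> D \<Longrightarrow> x - y \<in> D"
  by (metis subsp_add subsp_neg diff_conv_add_uminus)
lemma subsp_sum: "lin_subspace D \<Longrightarrow> (\<And>k. k \<in> A \<Longrightarrow> x k \<in> D) \<Longrightarrow> sum x A \<in> D"
  by (induction A rule: infinite_finite_induct) (auto simp: subsp_0 subsp_add)

context
  fixes D and f :: "'a::complex_inner \<Rightarrow> 'a \<Rightarrow> complex"
  assumes S: "sesq_on D f"
begin

lemma sub: "lin_subspace D" using S by (simp add: sesq_on_def)

lemma addL: "x \<in> D \<Longrightarrow> y \<in> D \<Longrightarrow> z \<in> D \<Longrightarrow> f (x + y) z = f x z + f y z"
  using S by (simp add: sesq_on_def)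
lemma addR: "x \<in> D \<Longrightarrow> y \<in> D \<Longrightarrow> z \<in> D \<Longrightarrow> f z (x + y) = f z x + f z y"
  using S by (simp add: sesq_on_def)
lemma scL: "x \<in> D \<Longrightarrow> y \<in> D \<Longrightarrow> f (scaleC a x) y = a * f x y"
  using S by (simp add: sesq_on_def)
lemma scR: "x \<in> D \<Longrightarrow> y \<in> D \<Longrightarrow> f x (scaleC a y) = cnj a * f x y"
  using S by (simp add: sesq_on_def)

lemma expand: assumes "x \<in> D" "y \<in> D"
  shows "f (x + scaleC c y) (x + scaleC c y) = f x x + cnj c * f x y + c * f y x + (c * cnj c) * f y y"
proof -
  have cy: "scaleC c y \<in> D" using assms sub subsp_scale by blast
  have "f (x + scaleC c y) (x + scaleC c y) = f x (x + scaleC c y) + f (scaleC c y) (x + scaleC c y)"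
    using addL assms cy sub subsp_add by blast
  also have "\<dots> = f x x + f x (scaleC c y) + (f (scaleC c y) x + f (scaleC c y) (scaleC c y))"
    using addR assms cy by simp
  also have "\<dots> = f x x + cnj c * f x y + (c * f y x + c * (cnj c * f y y))"
    using scL scR assms cy by simp
  finally show ?thesis by (simp add: algebra_simps)
qed

lemma f_zero: "x \<in> D \<Longrightarrow> f 0 x = 0"
  using scL[of x x 0] by simp
lemma f_zero2: "x \<in> D \<Longrightarrow> f x 0 = 0"
  using scR[of x x 0] by simp

lemma polar: assumes "x \<in> D" "y \<in> D"
  shows "f x y = (f (x + scaleC 1 y) (x + scaleC 1 y) - f (x + scaleC (-1) y) (x + scaleC (-1) y)
     + \<i> * f (x + scaleC \<i> y) (x + scaleC \<i> y) - \<i> * f (x + scaleC (-\<i>) y) (x + scaleC (-\<i>) y)) / 4"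
  using assms by (simp add: expand algebra_simps)

lemma diag_zero_imp_zero: assumes "\<forall>z\<in>D. f z z = 0" "x \<in> D" "y \<in> D"
  shows "f x y = 0"
proof -
  have "\<And>c. x + scaleC c y \<in> D" using assms sub subsp_add subsp_scale by blast
  thus ?thesis using polar[OF assms(2,3)] assms(1) by simp
qed

end

lemma diag_eq_imp_eq: assumes S: "sesq_on D f" and "sesq_on D g" "\<forall>z\<in>D. f z z = g z z" "x \<in> D" "y \<in> D"
  shows "f x y = g x y"
proof -
  have "\<And>c. x + scaleC c y \<in> D" using assms sub[OF S] subsp_add subsp_scale by blast
  hence "f x y * 4 = g x y * 4" using polar[OF S assms(4,5)] polar[OF assms(2) assms(4,5)] assms(3) by simp
  thus ?thesis by simp
qed


definition qf :: "('a \<Rightarrow> 'a \<Rightarrow> complex) \<Rightarrow> 'a \<Rightarrow> real" where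
  "qf f x = Re (f x x)"

lemma discr: fixes a b c :: real
  assumes "\<forall>l. 0 \<le> a + l * b + l^2 * c" "0 \<le> c"
  shows "b^2 \<le> 4 * a * c"
proof (cases "c = 0")
  case True
  show ?thesis
  proof (rule ccontr)
    assume "\<not> ?thesis"
    hence "b \<noteq> 0" using True by simp
    have "0 \<le> a + (-(a+1)/b) * b + (-(a+1)/b)^2 * c" using assms(1) by blast
    thus False using True \<open>b \<noteq> 0\<close> by simp
  qed
next
  case False
  hence c: "c > 0" using assms(2) by simp
  have "0 \<le> a + (-b/(2*c)) * b + (-b/(2*c))^2 * c" using assms(1) by blast
  hence "0 \<le> (a + (-b/(2*c)) * b + (-b/(2*c))^2 * c) * (4*c)" using c by simp
  also have "\<dots> = 4*a*c - b^2" using c by (simp add: field_simps power2_eq_square)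
  finally show ?thesis by simp
qed

context
  fixes D and f :: "'a::complex_inner \<Rightarrow> 'a \<Rightarrow> complex"
  assumes S: "sesq_on D f" and P: "pos_on D f"
begin

lemma q_nonneg: "x \<in> D \<Longrightarrow> 0 \<le> qf f x"
  using P by (simp add: pos_on_def qf_def)

lemma diag_real: "x \<in> D \<Longrightarrow> f x x = complex_of_real (qf f x)"
  using P by (simp add: pos_on_def qf_def complex_eq_iff)

lemma q_scale: "x \<in> D \<Longrightarrow> qf f (scaleC c x) = (cmod c)^2 * qf f x"
proof -
  assume x: "x \<in> D"
  have "f (scaleC c x) (scaleC c x) = c * (cnj c * f x x)"
    using scL[OF S] scR[OF S] x sub[OF S] subsp_scale by metis
  also have "\<dots> = complex_of_real ((cmod c)^2) * f x x"
    by (subst complex_norm_square) (simp add: mult.assoc)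
  finally show ?thesis unfolding qf_def by simp
qed

lemma q_neg: "x \<in> D \<Longrightarrow> qf f (- x) = qf f x"
  using q_scale[of x "-1"] by (simp add: scaleC_minus1)

lemma q_zero: "qf f 0 = 0"
  using f_zero[OF S] subsp_0[OF sub[OF S]] by (simp add: qf_def)

lemma q_expand_real: assumes "x \<in> D" "y \<in> D"
  shows "qf f (x + scaleC (complex_of_real l) y) = qf f x + l * Re (f x y + f y x) + l^2 * qf f y"
  using expand[OF S assms, of "complex_of_real l"]
  by (simp add: qf_def power2_eq_square distrib_left)

lemma q_add: assumes "x \<in> D" "y \<in> D"
  shows "qf f (x + y) = qf f x + Re (f x y + f y x) + qf f y"
  using q_expand_real[OF assms, of 1] by (simp add: scaleC_one)

lemma q_diff: assumes "x \<in> D" "y \<in> D"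
  shows "qf f (x - y) = qf f x - Re (f x y + f y x) + qf f y"
  using q_expand_real[OF assms, of "-1"] by (simp add: scaleC_minus1)

lemma q_par: assumes "x \<in> D" "y \<in> D"
  shows "qf f (x + y) + qf f (x - y) = 2 * qf f x + 2 * qf f y"
  using q_add[OF assms] q_diff[OF assms] by simp

lemma cs_re: assumes "x \<in> D" "y \<in> D"
  shows "Re (f x y + f y x) \<le> 2 * sqrt (qf f x) * sqrt (qf f y)"
proof -
  let ?b = "Re (f x y + f y x)"
  have "\<forall>l. 0 \<le> qf f x + l * ?b + l^2 * qf f y"
  proof
    fix l
    have "x + scaleC (complex_of_real l) y \<in> D" using assms sub[OF S] subsp_add subsp_scale by blast
    thus "0 \<le> qf f x + l * ?b + l^2 * qf f y" using q_nonneg q_expand_real[OF assms] by metis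
  qed
  hence "?b^2 \<le> 4 * qf f x * qf f y" using discr q_nonneg assms by blast
  hence "sqrt (?b^2) \<le> sqrt (4 * qf f x * qf f y)" using real_sqrt_le_mono by blast
  hence "\<bar>?b\<bar> \<le> 2 * sqrt (qf f x) * sqrt (qf f y)"
    by (simp add: real_sqrt_mult)
  thus ?thesis by simp
qed

lemma tri: assumes "x \<in> D" "y \<in> D"
  shows "sqrt (qf f (x + y)) \<le> sqrt (qf f x) + sqrt (qf f y)"
proof -
  have le: "qf f (x + y) \<le> (sqrt (qf f x) + sqrt (qf f y))^2"
    using q_add[OF assms] cs_re[OF assms] q_nonneg assms
    by (simp add: power2_sum)
  show ?thesis using real_sqrt_le_mono[OF le] q_nonneg assms by simp
qed

lemma tri_diff: assumes "x \<in> D" "y \<in> D"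
  shows "sqrt (qf f (x - y)) \<le> sqrt (qf f x) + sqrt (qf f y)"
  using tri[of x "-y"] assms q_neg subsp_neg[OF sub[OF S]] by simp

lemma q_sym: assumes "x \<in> D" "y \<in> D" shows "qf f (x - y) = qf f (y - x)"
  using q_neg[of "x - y"] assms subsp_diff[OF sub[OF S]] by simp

lemma rev_tri: assumes "x \<in> D" "y \<in> D"
  shows "\<bar>sqrt (qf f x) - sqrt (qf f y)\<bar> \<le> sqrt (qf f (x - y))"
proof -
  have d: "x - y \<in> D" "y - x \<in> D" using assms subsp_diff[OF sub[OF S]] by auto
  have "sqrt (qf f x) \<le> sqrt (qf f (x - y)) + sqrt (qf f y)"
    using tri[OF d(1) assms(2)] by simp
  moreover have "sqrt (qf f y) \<le> sqrt (qf f (x - y)) + sqrt (qf f x)"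
    using tri[OF d(2) assms(1)] q_sym[OF assms] by simp
  ultimately show ?thesis unfolding abs_le_iff by linarith
qed

lemma tri_sum: assumes "\<And>k. k \<in> A \<Longrightarrow> x k \<in> D"
  shows "sqrt (qf f (sum x A)) \<le> (\<Sum>k\<in>A. sqrt (qf f (x k)))"
  using assms
proof (induction A rule: infinite_finite_induct)
  case (infinite A) thus ?case by (simp add: q_zero)
next
  case empty thus ?case by (simp add: q_zero)
next
  case (insert a A)
  have "sum x A \<in> D" using insert subsp_sum[OF sub[OF S]] by blast
  hence "sqrt (qf f (x a + sum x A)) \<le> sqrt (qf f (x a)) + sqrt (qf f (sum x A))"
    using tri insert by blast
  thus ?case using insert by simp
qed

end

lemma hnorm_qf: "hnorm x = sqrt (qf cinner x)"
  by (simp add: hnorm_def qf_def)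

lemma hnorm_nonneg: "0 \<le> hnorm x" by (simp add: hnorm_def cinner_nonneg)

lemma hnorm_tri: "hnorm (x + y) \<le> hnorm x + hnorm (y::'a::complex_inner)"
  unfolding hnorm_qf using tri[OF cinner_sesq cinner_pos] by simp

lemma hnorm_tri_diff: "hnorm (x - y) \<le> hnorm x + hnorm (y::'a::complex_inner)"
  unfolding hnorm_qf using tri_diff[OF cinner_sesq cinner_pos] by simp

lemma hnorm_scale: "hnorm (scaleC c x) = cmod c * hnorm (x::'a::complex_inner)"
  unfolding hnorm_qf using q_scale[OF cinner_sesq cinner_pos UNIV_I, where c=c and x=x] by (simp add: real_sqrt_mult)

lemma hnorm_neg: "hnorm (- x) = hnorm (x::'a::complex_inner)"
  unfolding hnorm_qf using q_neg[OF cinner_sesq cinner_pos] by simp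

lemma hnorm_sym: "hnorm (x - y) = hnorm (y - (x::'a::complex_inner))"
  by (metis hnorm_neg minus_diff_eq)

lemma hnorm_zero [simp]: "hnorm (0::'a::complex_inner) = 0"
  unfolding hnorm_qf using q_zero[OF cinner_sesq cinner_pos] by simp

lemma hnorm_eq_0: "hnorm (x::'a::complex_inner) = 0 \<longleftrightarrow> x = 0"
proof
  assume "hnorm x = 0"
  hence "Re (cinner x x) = 0" using cinner_nonneg[of x] by (simp add: hnorm_def)
  hence "cinner x x = 0" using cinner_self_real[of x] by (simp add: complex_eq_iff)
  thus "x = 0" by (rule cinner_eq_zero)
qed simp

lemma hnorm_sq: "(hnorm x)^2 = qf cinner (x::'a::complex_inner)"
  unfolding hnorm_qf using cinner_nonneg[of x] by (simp add: qf_def)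

lemma hnorm_sum: "hnorm (sum x A) \<le> (\<Sum>k\<in>A. hnorm (x k :: 'a::complex_inner))"
  unfolding hnorm_qf using tri_sum[OF cinner_sesq cinner_pos] by simp

lemma hnorm_tri3: "hnorm (x - z) \<le> hnorm (x - y) + hnorm (y - (z::'a::complex_inner))"
  using hnorm_tri[of "x - y" "y - z"] by simp


lemma half_half: "scaleC (1/2) a + scaleC (1/2) a = (a::'a::complex_inner)"
  using scaleC_add_left[of "1/2" "1/2" a] by (simp add: scaleC_one)

lemma add_self_scale: "a + a = scaleC 2 (a::'a::complex_inner)"
  using scaleC_add_left[of 1 1 a] by (simp add: scaleC_one)

lemma scale_decomp: "scaleC c (x::'a::complex_inner) =
   scaleC (complex_of_real (Re c)) x + scaleC \<i> (scaleC (complex_of_real (Im c)) x)"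
proof -
  have "c = complex_of_real (Re c) + \<i> * complex_of_real (Im c)" by (simp add: complex_eq_iff)
  hence "scaleC c x = scaleC (complex_of_real (Re c) + \<i> * complex_of_real (Im c)) x" by simp
  thus ?thesis by (simp add: scaleC_add_left scaleC_scaleC)
qed

lemma additive_bounded_zero:
  fixes phi :: "real \<Rightarrow> real"
  assumes add: "\<And>a b. phi (a + b) = phi a + phi b" and one: "phi 1 = 0"
    and bnd: "\<And>a. 0 \<le> a \<Longrightarrow> a \<le> 1 \<Longrightarrow> \<bar>phi a\<bar> \<le> M"
  shows "phi r = 0"
proof -
  have z: "phi 0 = 0" using add[of 0 0] by simp
  have nat: "phi (real n * a) = real n * phi a" for n a
  proof (induction n)
    case 0 show ?case using z by simp
  next
    case (Suc n)
    have "phi (real (Suc n) * a) = phi (a + real n * a)" by (simp add: algebra_simps)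
    also have "\<dots> = phi a + phi (real n * a)" by (rule add)
    finally show ?case using Suc.IH by (simp add: algebra_simps)
  qed
  have nat1: "phi (real n) = 0" for n using nat[of n 1] one by simp
  have neg: "phi (- a) = - phi a" for a
    using add[of a "-a"] z by simp
  have int: "phi (of_int k) = 0" for k
  proof (cases "k \<ge> 0")
    case True
    from nat1[of "nat k"] True show ?thesis by (simp add: of_nat_nat)
  next
    case False
    have "phi (of_int (-k)) = 0" using nat1[of "nat (-k)"] False by (simp add: of_nat_nat)
    moreover have "phi (of_int k) = - phi (of_int (-k))" using neg[of "of_int (-k)"] by simp
    ultimately show ?thesis by simp
  qed
  have fr: "\<bar>phi a\<bar> \<le> M" for a
  proof -
    have "phi a = phi (a - of_int \<lfloor>a\<rfloor>) + phi (of_int \<lfloor>a\<rfloor>)" using add[of "a - of_int \<lfloor>a\<rfloor>" "of_int \<lfloor>a\<rfloor>"] by simp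
    hence e: "phi a = phi (a - of_int \<lfloor>a\<rfloor>)" using int by simp
    have "0 \<le> a - of_int \<lfloor>a\<rfloor>" "a - of_int \<lfloor>a\<rfloor> \<le> 1" by linarith+
    thus ?thesis using bnd e by simp
  qed
  show "phi r = 0"
  proof (rule ccontr)
    assume ne: "phi r \<noteq> 0"
    obtain n :: nat where n: "M / \<bar>phi r\<bar> < real n" using reals_Archimedean2 by blast
    have "real n * \<bar>phi r\<bar> = \<bar>phi (real n * r)\<bar>" using nat[of n r] by (simp add: abs_mult)
    also have "\<dots> \<le> M" by (rule fr)
    finally have "real n * \<bar>phi r\<bar> \<le> M" .
    moreover have "M < real n * \<bar>phi r\<bar>" using n ne by (simp add: divide_less_eq)
    ultimately show False by simp
  qed
qed

context
  fixes D and q :: "'a::complex_inner \<Rightarrow> real"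
  assumes sub: "lin_subspace D"
    and nn: "\<forall>x\<in>D. 0 \<le> q x"
    and par: "\<forall>x\<in>D. \<forall>y\<in>D. q (x + y) + q (x - y) = 2 * q x + 2 * q y"
    and hom: "\<forall>x\<in>D. \<forall>c. q (scaleC c x) = (cmod c)^2 * q x"
begin

definition "RR x y = (q (x + y) - q (x - y)) / 4"
definition "BB x y = complex_of_real (RR x y) + \<i> * complex_of_real (RR x (scaleC \<i> y))"

lemma q0: "q 0 = 0"
  using hom subsp_0[OF sub] by (metis scaleC_zero_left norm_zero mult_zero_left zero_power2)

lemma qneg: "x \<in> D \<Longrightarrow> q (- x) = q x"
  using hom by (metis scaleC_minus1 norm_minus_cancel norm_one power_one mult_1)

lemma RR_sym: "x \<in> D \<Longrightarrow> y \<in> D \<Longrightarrow> RR x y = RR y x"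
  unfolding RR_def by (metis add.commute minus_diff_eq qneg subsp_diff[OF sub])

lemma RR_negL: "x \<in> D \<Longrightarrow> y \<in> D \<Longrightarrow> RR (- x) y = - RR x y"
proof -
  assume a: "x \<in> D" "y \<in> D"
  have "q (- x + y) = q (x - y)" using qneg[of "x - y"] a subsp_diff[OF sub] by simp
  moreover have "q (- x - y) = q (x + y)" using qneg[of "x + y"] a subsp_add[OF sub] by (simp add: algebra_simps)
  ultimately show ?thesis unfolding RR_def by (simp add: field_simps)
qed

lemma RR_mid: assumes "x \<in> D" "x' \<in> D" "y \<in> D"
  shows "RR x y + RR x' y = 2 * RR (scaleC (1/2) (x + x')) y"
proof -
  define h where "h = scaleC (1/2) (x + x')"
  define k where "k = scaleC (1/2) (x - x')"
  have hD: "h \<in> D" "k \<in> D" unfolding h_def k_def using assms sub subsp_add subsp_diff subsp_scale by blast+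
  have hk1: "h + k = x"
  proof -
    have "h + k = scaleC (1/2) ((x + x') + (x - x'))" unfolding h_def k_def by (simp only: scaleC_add_right)
    also have "\<dots> = scaleC (1/2) (x + x)" by (rule arg_cong[where f="scaleC (1/2)"]) simp
    also have "\<dots> = x" by (simp only: scaleC_add_right half_half)
    finally show ?thesis .
  qed
  have hk2: "h - k = x'"
  proof -
    have "h - k = scaleC (1/2) ((x + x') - (x - x'))" unfolding h_def k_def by (simp only: scaleC_diff_right)
    also have "\<dots> = scaleC (1/2) (x' + x')" by (rule arg_cong[where f="scaleC (1/2)"]) simp
    also have "\<dots> = x'" by (simp only: scaleC_add_right half_half)
    finally show ?thesis .
  qed
  have e1: "q (h + y + k) + q (h + y - k) = 2 * q (h + y) + 2 * q k"
    using par hD assms subsp_add[OF sub] by blast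
  have e2: "q (h - y + k) + q (h - y - k) = 2 * q (h - y) + 2 * q k"
    using par hD assms subsp_diff[OF sub] by blast
  have eq: "h + y + k = x + y" "h + y - k = x' + y" "h - y + k = x - y" "h - y - k = x' - y"
    using hk1 hk2 by (simp_all add: algebra_simps)
  have f1: "q (x + y) + q (x' + y) = 2 * q (h + y) + 2 * q k" using e1 unfolding eq .
  have f2: "q (x - y) + q (x' - y) = 2 * q (h - y) + 2 * q k" using e2 unfolding eq .
  have "(q (x + y) - q (x - y)) + (q (x' + y) - q (x' - y)) = 2 * (q (h + y) - q (h - y))" using f1 f2 by argo
  thus ?thesis unfolding RR_def h_def[symmetric] by (simp add: field_simps)
qed

lemma RR_zeroL: "y \<in> D \<Longrightarrow> RR 0 y = 0"
  unfolding RR_def using qneg by simp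

lemma RR_addL: assumes "x \<in> D" "x' \<in> D" "y \<in> D"
  shows "RR (x + x') y = RR x y + RR x' y"
proof -
  have xx: "x + x' \<in> D" using assms subsp_add[OF sub] by blast
  have "RR (x + x') y + RR 0 y = 2 * RR (scaleC (1/2) (x + x' + 0)) y"
    using RR_mid[OF xx subsp_0[OF sub] assms(3)] .
  hence "RR (x + x') y = 2 * RR (scaleC (1/2) (x + x')) y" using RR_zeroL assms by simp
  thus ?thesis using RR_mid[OF assms] by simp
qed

lemma RR_addR: assumes "x \<in> D" "y \<in> D" "y' \<in> D"
  shows "RR x (y + y') = RR x y + RR x y'"
  using RR_addL[OF assms(2,3,1)] RR_sym assms subsp_add[OF sub] by metis

abbreviation "sr r x \<equiv> scaleC (complex_of_real r) x"

lemma sr_add: "sr (a + b) x = sr a x + sr b x" by (simp add: scaleC_add_left)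

lemma RR_bound: assumes "x \<in> D" "y \<in> D" "\<bar>a\<bar> \<le> 1"
  shows "\<bar>RR (sr a x) y\<bar> \<le> (q x + q y) / 2"
proof -
  have ax: "sr a x \<in> D" using assms subsp_scale[OF sub] by blast
  have p: "q (sr a x + y) + q (sr a x - y) = 2 * q (sr a x) + 2 * q y" using par ax assms by blast
  have qa: "q (sr a x) = a^2 * q x" using hom assms by simp
  have "a^2 \<le> 1" using assms(3) by (simp add: abs_square_le_1)
  hence "a^2 * q x \<le> q x" using nn assms by (simp add: mult_left_le_one_le)
  moreover have "0 \<le> q (sr a x + y)" "0 \<le> q (sr a x - y)"
    using nn ax assms subsp_add[OF sub] subsp_diff[OF sub] by blast+
  ultimately show ?thesis unfolding RR_def using p qa by (simp add: abs_le_iff)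
qed

lemma RR_real: assumes x: "x \<in> D" and y: "y \<in> D"
  shows "RR (sr r x) y = r * RR x y"
proof -
  define phi where "phi a = RR (sr a x) y - a * RR x y" for a
  have srD: "\<And>a. sr a x \<in> D" using x subsp_scale[OF sub] by blast
  have add: "phi (a + b) = phi a + phi b" for a b
    unfolding phi_def sr_add using RR_addL[OF srD srD y] by (simp add: algebra_simps)
  have one: "phi 1 = 0" by (simp add: phi_def scaleC_one)
  define M where "M = (q x + q y) / 2 + \<bar>RR x y\<bar>"
  have bnd: "\<bar>phi a\<bar> \<le> M" if "0 \<le> a" "a \<le> 1" for a
  proof -
    have "\<bar>RR (sr a x) y\<bar> \<le> (q x + q y) / 2" using RR_bound x y that by simp
    moreover have "\<bar>a * RR x y\<bar> \<le> \<bar>RR x y\<bar>" using that by (simp add: abs_mult mult_left_le_one_le)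
    ultimately show ?thesis unfolding phi_def M_def by linarith
  qed
  have "phi r = 0" by (rule additive_bounded_zero[OF add one bnd])
  thus ?thesis unfolding phi_def by simp
qed

lemma RR_realR: "x \<in> D \<Longrightarrow> y \<in> D \<Longrightarrow> RR x (sr r y) = r * RR x y"
  using RR_real RR_sym subsp_scale[OF sub] by metis

lemma RR_ii: assumes "x \<in> D" "y \<in> D"
  shows "RR (scaleC \<i> x) (scaleC \<i> y) = RR x y"
proof -
  have "q (scaleC \<i> x + scaleC \<i> y) = q (x + y)"
    using hom assms subsp_add[OF sub] by (simp add: scaleC_add_right[symmetric])
  moreover have "q (scaleC \<i> x - scaleC \<i> y) = q (x - y)"
    using hom assms subsp_diff[OF sub] by (simp add: scaleC_diff_right[symmetric])
  ultimately show ?thesis unfolding RR_def by simp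
qed

lemma RR_iL: assumes "x \<in> D" "y \<in> D"
  shows "RR (scaleC \<i> x) y = - RR x (scaleC \<i> y)"
proof -
  have ix: "scaleC \<i> x \<in> D" using assms subsp_scale[OF sub] by blast
  have "RR (scaleC \<i> x) y = RR (scaleC \<i> (scaleC \<i> x)) (scaleC \<i> y)" using RR_ii[OF ix assms(2)] by simp
  also have "scaleC \<i> (scaleC \<i> x) = - x" by (simp add: scaleC_scaleC scaleC_minus1)
  finally show ?thesis using RR_negL assms subsp_scale[OF sub] by simp
qed

lemma BB_addL: "x \<in> D \<Longrightarrow> x' \<in> D \<Longrightarrow> y \<in> D \<Longrightarrow> BB (x + x') y = BB x y + BB x' y"
  unfolding BB_def using RR_addL subsp_scale[OF sub] by (simp add: algebra_simps)

lemma BB_addR: "x \<in> D \<Longrightarrow> y \<in> D \<Longrightarrow> y' \<in> D \<Longrightarrow> BB x (y + y') = BB x y + BB x y'"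
  unfolding BB_def using RR_addR subsp_scale[OF sub] by (simp add: algebra_simps scaleC_add_right)

lemma BB_realL: "x \<in> D \<Longrightarrow> y \<in> D \<Longrightarrow> BB (sr r x) y = complex_of_real r * BB x y"
  unfolding BB_def using RR_real subsp_scale[OF sub] by (simp add: algebra_simps)

lemma BB_realR: "x \<in> D \<Longrightarrow> y \<in> D \<Longrightarrow> BB x (sr r y) = complex_of_real r * BB x y"
proof -
  assume a: "x \<in> D" "y \<in> D"
  have "scaleC \<i> (sr r y) = sr r (scaleC \<i> y)" by (simp add: scaleC_scaleC mult.commute)
  thus ?thesis unfolding BB_def using RR_realR a subsp_scale[OF sub] by (simp add: algebra_simps)
qed

lemma BB_iL: assumes "x \<in> D" "y \<in> D" shows "BB (scaleC \<i> x) y = \<i> * BB x y"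
proof -
  have "BB (scaleC \<i> x) y = complex_of_real (- RR x (scaleC \<i> y)) + \<i> * complex_of_real (RR x y)"
    unfolding BB_def using RR_iL[OF assms] RR_ii[OF assms] by simp
  thus ?thesis unfolding BB_def by (simp add: algebra_simps)
qed

lemma BB_iR: assumes "x \<in> D" "y \<in> D" shows "BB x (scaleC \<i> y) = - \<i> * BB x y"
proof -
  have iy: "scaleC \<i> y \<in> D" using assms subsp_scale[OF sub] by blast
  have "scaleC \<i> (scaleC \<i> y) = - y" by (simp add: scaleC_scaleC scaleC_minus1)
  hence "RR x (scaleC \<i> (scaleC \<i> y)) = - RR x y"
    using RR_negL RR_sym assms subsp_neg[OF sub] by metis
  hence "BB x (scaleC \<i> y) = complex_of_real (RR x (scaleC \<i> y)) - \<i> * complex_of_real (RR x y)"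
    unfolding BB_def by simp
  thus ?thesis unfolding BB_def by (simp add: algebra_simps)
qed

lemma BB_scL: assumes "x \<in> D" "y \<in> D" shows "BB (scaleC c x) y = c * BB x y"
proof -
  have d: "sr (Re c) x \<in> D" "sr (Im c) x \<in> D" using assms subsp_scale[OF sub] by blast+
  have "BB (scaleC c x) y = BB (sr (Re c) x) y + BB (scaleC \<i> (sr (Im c) x)) y"
    using scale_decomp[of c x] BB_addL d assms subsp_scale[OF sub] by metis
  also have "\<dots> = complex_of_real (Re c) * BB x y + \<i> * (complex_of_real (Im c) * BB x y)"
    using BB_realL BB_iL d assms by simp
  also have "\<dots> = c * BB x y" by (simp add: algebra_simps complex_eq_iff)
  finally show ?thesis .
qed

lemma BB_scR: assumes "x \<in> D" "y \<in> D" shows "BB x (scaleC c y) = cnj c * BB x y"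
proof -
  have d: "sr (Re c) y \<in> D" "sr (Im c) y \<in> D" using assms subsp_scale[OF sub] by blast+
  have "BB x (scaleC c y) = BB x (sr (Re c) y) + BB x (scaleC \<i> (sr (Im c) y))"
    using scale_decomp[of c y] BB_addR d assms subsp_scale[OF sub] by metis
  also have "\<dots> = complex_of_real (Re c) * BB x y - \<i> * (complex_of_real (Im c) * BB x y)"
    using BB_realR BB_iR d assms by simp
  also have "\<dots> = cnj c * BB x y" by (simp add: algebra_simps complex_eq_iff)
  finally show ?thesis .
qed

lemma BB_diag: assumes "x \<in> D" shows "BB x x = complex_of_real (q x)"
proof -
  have "RR x x = q x"
  proof -
    have "q (x + x) = 4 * q x" using hom assms by (simp add: add_self_scale)
    thus ?thesis unfolding RR_def using q0 by simp
  qed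
  moreover have "RR x (scaleC \<i> x) = 0"
  proof -
    have "x + scaleC \<i> x = scaleC (1 + \<i>) x" by (simp add: scaleC_add_left scaleC_one)
    moreover have "x - scaleC \<i> x = scaleC (1 - \<i>) x" by (simp add: scaleC_diff_left scaleC_one)
    moreover have "cmod (1 + \<i>) = cmod (1 - \<i>)" by (simp add: cmod_def)
    ultimately show ?thesis unfolding RR_def using hom assms by simp
  qed
  ultimately show ?thesis unfolding BB_def by simp
qed

lemma jvn: "sesq_on D BB \<and> (\<forall>x\<in>D. BB x x = complex_of_real (q x))"
  unfolding sesq_on_def using sub BB_addL BB_addR BB_scL BB_scR BB_diag by blast

end

lemma jvn_exists:
  fixes D and q :: "'a::complex_inner \<Rightarrow> real"
  assumes "lin_subspace D" "\<forall>x\<in>D. 0 \<le> q x"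
    "\<forall>x\<in>D. \<forall>y\<in>D. q (x + y) + q (x - y) = 2 * q x + 2 * q y"
    "\<forall>x\<in>D. \<forall>c. q (scaleC c x) = (cmod c)^2 * q x"
  shows "\<exists>B. sesq_on D B \<and> (\<forall>x\<in>D. B x x = complex_of_real (q x))"
  using jvn[OF assms] by blast


definition tcauchy :: "'a::complex_inner sform \<Rightarrow> (nat \<Rightarrow> 'a) \<Rightarrow> bool" where
  "tcauchy t z \<longleftrightarrow> (\<forall>n. z n \<in> fdom t) \<and> (\<forall>e>0. \<exists>N. \<forall>m\<ge>N. \<forall>n\<ge>N. qf (fval t) (z m - z n) < e)"

definition hconv :: "(nat \<Rightarrow> 'a::complex_inner) \<Rightarrow> 'a \<Rightarrow> bool" where
  "hconv z x \<longleftrightarrow> (\<lambda>n. hnorm (z n - x)) \<longlonglongrightarrow> 0"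

definition adm :: "'a::complex_inner sform \<Rightarrow> 'a \<Rightarrow> (nat \<Rightarrow> 'a) \<Rightarrow> bool" where
  "adm t x z \<longleftrightarrow> tcauchy t z \<and> hconv z x"

definition limT :: "'a::complex_inner sform \<Rightarrow> (nat \<Rightarrow> 'a) \<Rightarrow> real" where
  "limT t z = lim (\<lambda>n. qf (fval t) (z n))"

definition Dt :: "'a::complex_inner sform \<Rightarrow> 'a set" where
  "Dt t = {x. \<exists>z. adm t x z}"

definition st :: "'a::complex_inner sform \<Rightarrow> 'a \<Rightarrow> real" where
  "st t x = Inf {limT t z | z. adm t x z}"

lemma abs_hnorm [simp]: "\<bar>hnorm x\<bar> = hnorm x"
  by (simp add: hnorm_nonneg)

lemma squeeze0: fixes f g :: "nat \<Rightarrow> real"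
  assumes "\<And>n. 0 \<le> f n" "\<And>n. f n \<le> g n" "g \<longlonglongrightarrow> 0" shows "f \<longlonglongrightarrow> 0"
  by (rule real_tendsto_sandwich[of "\<lambda>n. 0" f sequentially g]) (auto simp: assms)

lemma hconv_iff: "hconv z x \<longleftrightarrow> (\<forall>e>0. \<exists>N. \<forall>n\<ge>N. hnorm (z n - x) < e)"
  unfolding hconv_def lim_sequentially using hnorm_nonneg by simp

lemma hconv_const: "hconv (\<lambda>n. x) x"
  by (simp add: hconv_def)

lemma hconv_add: "hconv z x \<Longrightarrow> hconv w y \<Longrightarrow> hconv (\<lambda>n. z n + w n) (x + y)"
proof -
  assume a: "hconv z x" "hconv w y"
  have lim: "(\<lambda>n. hnorm (z n - x) + hnorm (w n - y)) \<longlonglongrightarrow> 0"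
    using a tendsto_add[of _ 0 _ _ 0] unfolding hconv_def by fastforce
  have le: "\<And>n. hnorm ((z n + w n) - (x + y)) \<le> hnorm (z n - x) + hnorm (w n - y)"
    using hnorm_tri by (metis add_diff_add)
  show ?thesis unfolding hconv_def
    by (rule squeeze0[where f="\<lambda>n. hnorm ((z n + w n) - (x + y))", OF hnorm_nonneg le lim])
qed

lemma hconv_scale: "hconv z x \<Longrightarrow> hconv (\<lambda>n. scaleC c (z n)) (scaleC c x)"
proof -
  assume a: "hconv z x"
  have "(\<lambda>n. cmod c * hnorm (z n - x)) \<longlonglongrightarrow> cmod c * 0"
    using a unfolding hconv_def by (intro tendsto_mult tendsto_const)
  thus ?thesis unfolding hconv_def by (simp add: scaleC_diff_right[symmetric] hnorm_scale)
qed

lemma hconv_neg: "hconv z x \<Longrightarrow> hconv (\<lambda>n. - z n) (- x)"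
  using hconv_scale[of z x "-1"] by (simp add: scaleC_minus1)

lemma hconv_diff: "hconv z x \<Longrightarrow> hconv w y \<Longrightarrow> hconv (\<lambda>n. z n - w n) (x - y)"
proof -
  assume a: "hconv z x" "hconv w y"
  have "hconv (\<lambda>n. z n + - w n) (x + - y)" by (rule hconv_add[OF a(1) hconv_neg[OF a(2)]])
  thus ?thesis by simp
qed

lemma hconv_unique: "hconv z x \<Longrightarrow> hconv z y \<Longrightarrow> x = y"
proof -
  assume a: "hconv z x" "hconv z y"
  have "(\<lambda>n. hnorm (z n - x) + hnorm (z n - y)) \<longlonglongrightarrow> 0"
    using a tendsto_add[of _ 0 _ _ 0] unfolding hconv_def by fastforce
  moreover have "\<And>n. hnorm (x - y) \<le> hnorm (z n - x) + hnorm (z n - y)"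
    using hnorm_tri3 hnorm_sym by metis
  ultimately have "hnorm (x - y) \<le> 0"
    by (intro tendsto_lowerbound[OF _ _ trivial_limit_sequentially]) (auto intro: always_eventually)
  hence "hnorm (x - y) = 0" using hnorm_nonneg[of "x - y"] by simp
  thus ?thesis by (simp add: hnorm_eq_0)
qed

context
  fixes t :: "'a::complex_inner sform"
  assumes S: "sesq_on (fdom t) (fval t)" and P: "pos_on (fdom t) (fval t)"
begin

abbreviation "TT \<equiv> qf (fval t)"
abbreviation "DD \<equiv> fdom t"

lemma Dsub: "lin_subspace DD" using sub[OF S] .

lemma T_nonneg: "x \<in> DD \<Longrightarrow> 0 \<le> TT x" using q_nonneg[OF S P] .

lemma T_add_le: assumes "x \<in> DD" "y \<in> DD" shows "TT (x + y) \<le> 2 * TT x + 2 * TT y"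
  using q_par[OF S P assms] T_nonneg[of "x - y"] subsp_diff[OF Dsub assms] by linarith

lemma tc_D: "tcauchy t z \<Longrightarrow> z n \<in> DD" by (simp add: tcauchy_def)

lemma tc_conv: assumes "tcauchy t z" shows "(\<lambda>n. TT (z n)) \<longlonglongrightarrow> limT t z"
proof -
  have zD: "\<And>n. z n \<in> DD" using assms tc_D by blast
  have "Cauchy (\<lambda>n. sqrt (TT (z n)))"
  proof (rule CauchyI)
    fix e :: real assume e: "0 < e"
    then obtain N where N: "\<forall>m\<ge>N. \<forall>n\<ge>N. TT (z m - z n) < e^2"
      using assms unfolding tcauchy_def by (meson zero_less_power)
    show "\<exists>M. \<forall>m\<ge>M. \<forall>n\<ge>M. norm (sqrt (TT (z m)) - sqrt (TT (z n))) < e"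
    proof (intro exI allI impI)
      fix m n assume "N \<le> m" "N \<le> n"
      hence "TT (z m - z n) < e^2" using N by blast
      hence "sqrt (TT (z m - z n)) < e" using e by (metis real_sqrt_less_iff real_sqrt_abs abs_of_pos power2_eq_square real_sqrt_pow2_iff)
      thus "norm (sqrt (TT (z m)) - sqrt (TT (z n))) < e"
        using rev_tri[OF S P zD zD, of m n] by simp
    qed
  qed
  hence "convergent (\<lambda>n. sqrt (TT (z n)))" by (rule Cauchy_convergent)
  then obtain L where "(\<lambda>n. sqrt (TT (z n))) \<longlonglongrightarrow> L" by (auto simp: convergent_def)
  hence "(\<lambda>n. (sqrt (TT (z n)))^2) \<longlonglongrightarrow> L^2" by (intro tendsto_intros)
  hence "(\<lambda>n. TT (z n)) \<longlonglongrightarrow> L^2" using T_nonneg zD by simp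
  thus ?thesis unfolding limT_def by (metis limI)
qed

lemma limT_nonneg: "tcauchy t z \<Longrightarrow> 0 \<le> limT t z"
  by (rule LIMSEQ_le_const[OF tc_conv]) (auto intro: T_nonneg tc_D)

lemma tc_const: "x \<in> DD \<Longrightarrow> tcauchy t (\<lambda>n. x)"
  unfolding tcauchy_def using q_zero[OF S P] by simp

lemma limT_const: "x \<in> DD \<Longrightarrow> limT t (\<lambda>n. x) = TT x"
  unfolding limT_def by simp

lemma tc_add: assumes "tcauchy t z" "tcauchy t w" shows "tcauchy t (\<lambda>n. z n + w n)"
  unfolding tcauchy_def
proof (intro conjI allI impI)
  fix n show "z n + w n \<in> DD" using assms tc_D subsp_add[OF Dsub] by blast
next
  fix e :: real assume e: "0 < e"
  obtain N1 where N1: "\<forall>m\<ge>N1. \<forall>n\<ge>N1. TT (z m - z n) < e/4"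
    using assms(1) e unfolding tcauchy_def by (meson zero_less_divide_iff zero_less_numeral)
  obtain N2 where N2: "\<forall>m\<ge>N2. \<forall>n\<ge>N2. TT (w m - w n) < e/4"
    using assms(2) e unfolding tcauchy_def by (meson zero_less_divide_iff zero_less_numeral)
  show "\<exists>N. \<forall>m\<ge>N. \<forall>n\<ge>N. TT (z m + w m - (z n + w n)) < e"
  proof (intro exI allI impI)
    fix m n assume mn: "max N1 N2 \<le> m" "max N1 N2 \<le> n"
    have d: "z m - z n \<in> DD" "w m - w n \<in> DD" using assms tc_D subsp_diff[OF Dsub] by blast+
    have eq: "z m + w m - (z n + w n) = (z m - z n) + (w m - w n)" by simp
    have "TT (z m + w m - (z n + w n)) \<le> 2 * TT (z m - z n) + 2 * TT (w m - w n)"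
      using T_add_le[OF d] by (simp only: eq)
    moreover have "TT (z m - z n) < e/4" "TT (w m - w n) < e/4" using N1 N2 mn by auto
    ultimately show "TT (z m + w m - (z n + w n)) < e" by linarith
  qed
qed

lemma tc_scale: assumes "tcauchy t z" shows "tcauchy t (\<lambda>n. scaleC c (z n))"
  unfolding tcauchy_def
proof (intro conjI allI impI)
  fix n show "scaleC c (z n) \<in> DD" using assms tc_D subsp_scale[OF Dsub] by blast
next
  fix e :: real assume e: "0 < e"
  have cp: "0 < (cmod c)^2 + 1" using zero_le_power2[of "cmod c"] by linarith
  have p: "0 < e / ((cmod c)^2 + 1)" using e cp by simp
  obtain N where N: "\<forall>m\<ge>N. \<forall>n\<ge>N. TT (z m - z n) < e / ((cmod c)^2 + 1)"
    using assms p unfolding tcauchy_def by blast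
  show "\<exists>N. \<forall>m\<ge>N. \<forall>n\<ge>N. TT (scaleC c (z m) - scaleC c (z n)) < e"
  proof (intro exI allI impI)
    fix m n assume mn: "N \<le> m" "N \<le> n"
    have d: "z m - z n \<in> DD" using assms tc_D subsp_diff[OF Dsub] by blast
    have "TT (scaleC c (z m) - scaleC c (z n)) = (cmod c)^2 * TT (z m - z n)"
      using q_scale[OF S P d] by (simp add: scaleC_diff_right)
    also have "\<dots> \<le> ((cmod c)^2 + 1) * TT (z m - z n)" using T_nonneg[OF d] by (simp add: mult_right_mono)
    also have "\<dots> < ((cmod c)^2 + 1) * (e / ((cmod c)^2 + 1))"
      using N mn cp by (intro mult_strict_left_mono) auto
    also have "\<dots> = e" using cp by simp
    finally show "TT (scaleC c (z m) - scaleC c (z n)) < e" .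
  qed
qed

lemma tc_neg: "tcauchy t z \<Longrightarrow> tcauchy t (\<lambda>n. - z n)"
  using tc_scale[of z "-1"] by (simp add: scaleC_minus1)

lemma tc_diff: "tcauchy t z \<Longrightarrow> tcauchy t w \<Longrightarrow> tcauchy t (\<lambda>n. z n - w n)"
proof -
  assume a: "tcauchy t z" "tcauchy t w"
  have "tcauchy t (\<lambda>n. z n + - w n)" by (rule tc_add[OF a(1) tc_neg[OF a(2)]])
  thus ?thesis by simp
qed

lemma limT_scale: assumes "tcauchy t z" shows "limT t (\<lambda>n. scaleC c (z n)) = (cmod c)^2 * limT t z"
proof -
  have a: "(\<lambda>n. TT (scaleC c (z n))) \<longlonglongrightarrow> limT t (\<lambda>n. scaleC c (z n))" using tc_conv tc_scale assms by blast
  have b: "(\<lambda>n. TT (scaleC c (z n))) = (\<lambda>n. (cmod c)^2 * TT (z n))"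
    using q_scale[OF S P] tc_D[OF assms] by auto
  have c: "(\<lambda>n. (cmod c)^2 * TT (z n)) \<longlonglongrightarrow> (cmod c)^2 * limT t z"
    using tc_conv[OF assms] by (intro tendsto_intros)
  from a[unfolded b] c show ?thesis by (rule LIMSEQ_unique)
qed

lemma limT_par: assumes "tcauchy t z" "tcauchy t w"
  shows "limT t (\<lambda>n. z n + w n) + limT t (\<lambda>n. z n - w n) = 2 * limT t z + 2 * limT t w"
proof -
  have a: "(\<lambda>n. TT (z n + w n) + TT (z n - w n)) \<longlonglongrightarrow> limT t (\<lambda>n. z n + w n) + limT t (\<lambda>n. z n - w n)"
    using tc_conv tc_add tc_diff assms by (intro tendsto_add) blast+
  have b: "(\<lambda>n. TT (z n + w n) + TT (z n - w n)) = (\<lambda>n. 2 * TT (z n) + 2 * TT (w n))"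
    using q_par[OF S P] tc_D assms by blast
  have c: "(\<lambda>n. 2 * TT (z n) + 2 * TT (w n)) \<longlonglongrightarrow> 2 * limT t z + 2 * limT t w"
    using tc_conv assms by (intro tendsto_intros) auto
  from a[unfolded b] c show ?thesis by (rule LIMSEQ_unique)
qed

lemma adm_const: "x \<in> DD \<Longrightarrow> adm t x (\<lambda>n. x)"
  by (simp add: adm_def tc_const hconv_const)
lemma adm_add: "adm t x z \<Longrightarrow> adm t y w \<Longrightarrow> adm t (x + y) (\<lambda>n. z n + w n)"
  by (simp add: adm_def tc_add hconv_add)
lemma adm_diff: "adm t x z \<Longrightarrow> adm t y w \<Longrightarrow> adm t (x - y) (\<lambda>n. z n - w n)"
  by (simp add: adm_def tc_diff hconv_diff)
lemma adm_scale: "adm t x z \<Longrightarrow> adm t (scaleC c x) (\<lambda>n. scaleC c (z n))"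
  by (simp add: adm_def tc_scale hconv_scale)

lemma DD_Dt: "x \<in> DD \<Longrightarrow> x \<in> Dt t"
  unfolding Dt_def using adm_const by blast

lemma Dt_sub: "lin_subspace (Dt t)"
  unfolding lin_subspace_def Dt_def
  using adm_add adm_scale adm_const subsp_0[OF Dsub] by blast

lemma st_bdd: "bdd_below {limT t z | z. adm t x z}"
  by (rule bdd_belowI[of _ 0]) (auto simp: adm_def limT_nonneg)

lemma st_le: "adm t x z \<Longrightarrow> st t x \<le> limT t z"
  unfolding st_def by (rule cInf_lower[OF _ st_bdd]) blast

lemma st_nonneg: "x \<in> Dt t \<Longrightarrow> 0 \<le> st t x"
  unfolding st_def Dt_def by (rule cInf_greatest) (auto simp: adm_def limT_nonneg)

lemma st_approx: assumes "x \<in> Dt t" "0 < e" shows "\<exists>z. adm t x z \<and> limT t z < st t x + e"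
proof -
  have ne: "{limT t z | z. adm t x z} \<noteq> {}" using assms unfolding Dt_def by blast
  have "st t x < st t x + e" using assms by simp
  then obtain v where "v \<in> {limT t z | z. adm t x z}" "v < st t x + e"
    using cInf_less_iff[OF ne st_bdd] unfolding st_def by blast
  thus ?thesis by blast
qed

lemma st_ge: assumes "x \<in> Dt t" "\<And>z. adm t x z \<Longrightarrow> v \<le> limT t z" shows "v \<le> st t x"
  unfolding st_def using assms unfolding Dt_def by (intro cInf_greatest) auto

lemma st_le_T: "x \<in> DD \<Longrightarrow> st t x \<le> TT x"
  using st_le[OF adm_const] limT_const by metis

lemma st_le_eps: assumes "x \<in> Dt t" "\<And>z. adm t x z \<Longrightarrow> v \<le> c * limT t z" "0 \<le> c"
  shows "v \<le> c * st t x"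
proof (rule field_le_epsilon)
  fix e :: real assume e: "0 < e"
  have "0 < e / (c + 1)" using e assms by simp
  then obtain z where z: "adm t x z" "limT t z < st t x + e / (c + 1)" using st_approx assms by blast
  have "v \<le> c * limT t z" using assms z by blast
  also have "\<dots> \<le> c * (st t x + e / (c + 1))" using z assms by (intro mult_left_mono) auto
  also have "\<dots> = c * st t x + e * (c / (c + 1))" by (simp add: algebra_simps)
  also have "\<dots> \<le> c * st t x + e"
  proof -
    have "(c / (c + 1)) * e \<le> e" using e assms(3) by (intro mult_left_le_one_le) auto
    thus ?thesis by (simp add: mult.commute)
  qed
  finally show "v \<le> c * st t x + e" .
qed

lemma st_hom_le: assumes "x \<in> Dt t" shows "st t (scaleC c x) \<le> (cmod c)^2 * st t x"
proof (rule st_le_eps[OF assms])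
  fix z assume "adm t x z"
  thus "st t (scaleC c x) \<le> (cmod c)^2 * limT t z"
    using st_le[OF adm_scale] limT_scale adm_def by metis
qed simp

lemma st_hom: assumes "x \<in> Dt t" shows "st t (scaleC c x) = (cmod c)^2 * st t x"
proof (cases "c = 0")
  case True
  have "st t 0 \<le> 0" using st_le[OF adm_const[OF subsp_0[OF Dsub]]] limT_const[OF subsp_0[OF Dsub]]
    q_zero[OF S P] by simp
  moreover have "0 \<le> st t 0" using st_nonneg subsp_0[OF Dt_sub] by blast
  ultimately show ?thesis using True by simp
next
  case False
  have cx: "scaleC c x \<in> Dt t" using assms subsp_scale[OF Dt_sub] by blast
  have "st t x = st t (scaleC (inverse c) (scaleC c x))" using False by (simp add: scaleC_scaleC scaleC_one)
  also have "\<dots> \<le> (cmod (inverse c))^2 * st t (scaleC c x)" by (rule st_hom_le[OF cx])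
  finally have "(cmod c)^2 * st t x \<le> (cmod c)^2 * ((cmod (inverse c))^2 * st t (scaleC c x))"
    by (simp add: mult_left_mono)
  also have "\<dots> = st t (scaleC c x)"
  proof -
    have "(cmod c)^2 * (cmod (inverse c))^2 = 1" using False by (simp add: norm_inverse power_inverse)
    thus ?thesis by (metis mult.assoc mult_1)
  qed
  finally show ?thesis using st_hom_le[OF assms, of c] by simp
qed

lemma st_par_le: assumes "x \<in> Dt t" "y \<in> Dt t"
  shows "st t (x + y) + st t (x - y) \<le> 2 * st t x + 2 * st t y"
proof (rule field_le_epsilon)
  fix e :: real assume e: "0 < e"
  obtain z where z: "adm t x z" "limT t z < st t x + e/4" using st_approx assms e by (meson zero_less_divide_iff zero_less_numeral)
  obtain w where w: "adm t y w" "limT t w < st t y + e/4" using st_approx assms e by (meson zero_less_divide_iff zero_less_numeral)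
  have "st t (x + y) + st t (x - y) \<le> limT t (\<lambda>n. z n + w n) + limT t (\<lambda>n. z n - w n)"
    using st_le[OF adm_add[OF z(1) w(1)]] st_le[OF adm_diff[OF z(1) w(1)]] by simp
  also have "\<dots> = 2 * limT t z + 2 * limT t w" using limT_par z w adm_def by blast
  finally show "st t (x + y) + st t (x - y) \<le> 2 * st t x + 2 * st t y + e" using z w by linarith
qed

lemma st_par: assumes "x \<in> Dt t" "y \<in> Dt t"
  shows "st t (x + y) + st t (x - y) = 2 * st t x + 2 * st t y"
proof -
  have xy: "x + y \<in> Dt t" "x - y \<in> Dt t" using assms subsp_add[OF Dt_sub] subsp_diff[OF Dt_sub] by blast+
  have "st t ((x + y) + (x - y)) + st t ((x + y) - (x - y)) \<le> 2 * st t (x + y) + 2 * st t (x - y)"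
    by (rule st_par_le[OF xy])
  moreover have "(x + y) + (x - y) = scaleC 2 x" "(x + y) - (x - y) = scaleC 2 y"
    by (simp_all add: add_self_scale[symmetric] algebra_simps)
  ultimately have "4 * st t x + 4 * st t y \<le> 2 * st t (x + y) + 2 * st t (x - y)"
    using st_hom assms by simp
  thus ?thesis using st_par_le[OF assms] by linarith
qed

lemma st_form_exists: "\<exists>B. sesq_on (Dt t) B \<and> (\<forall>x\<in>Dt t. B x x = complex_of_real (st t x))"
  by (rule jvn_exists[OF Dt_sub]) (auto simp: st_nonneg st_par st_hom)

end


lemma geo_tail: "(\<Sum>k\<in>{j<..n}. (1/2::real)^k) = (if j \<le> n then (1/2)^j - (1/2)^n else 0)"
proof (induction n)
  case 0 thus ?case by simp
next
  case (Suc n)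
  show ?case
  proof (cases "j \<le> n")
    case True
    hence "{j<..Suc n} = insert (Suc n) {j<..n}" by auto
    hence "(\<Sum>k\<in>{j<..Suc n}. (1/2::real)^k) = (1/2)^Suc n + (\<Sum>k\<in>{j<..n}. (1/2)^k)" by simp
    thus ?thesis using Suc True by simp
  next
    case False
    hence "{j<..Suc n} = {}" by auto
    thus ?thesis using False by (cases "j = Suc n") auto
  qed
qed

lemma geo_tail_le: "(\<Sum>k\<in>{j<..n}. (1/2::real)^k) \<le> (1/2)^j"
  by (simp add: geo_tail)

lemma geo_le2: "(\<Sum>k\<in>{..n}. (1/2::real)^k) \<le> 2"
proof -
  have "{..n} = insert 0 {0<..n}" by auto
  hence "(\<Sum>k\<in>{..n}. (1/2::real)^k) = 1 + (\<Sum>k\<in>{0<..n}. (1/2)^k)" by simp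
  thus ?thesis using geo_tail_le[of 0 n] by simp
qed

lemma half_pow_small: "0 < (e::real) \<Longrightarrow> \<exists>N. \<forall>n\<ge>N. (1/2::real)^n < e"
proof -
  assume e: "0 < e"
  obtain N where "(1/2::real)^N < e" using real_arch_pow_inv[OF e, of "1/2"] by auto
  moreover have "\<And>n. N \<le> n \<Longrightarrow> (1/2::real)^n \<le> (1/2)^N" by (simp add: power_decreasing)
  ultimately show ?thesis by (meson le_less_trans)
qed

context
  fixes t :: "'a::complex_inner sform"
  assumes S: "sesq_on (fdom t) (fval t)" and P: "pos_on (fdom t) (fval t)"
begin

lemma sqT_tc: "tcauchy t z \<Longrightarrow> z m \<in> fdom t" using tc_D[OF S P] .

lemma telescope:
  fixes d :: "nat \<Rightarrow> 'a" and w :: "nat \<Rightarrow> nat \<Rightarrow> 'a" and c :: real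
  assumes adm: "\<And>k. adm t (d k) (w k)"
    and bnd: "\<And>k. \<exists>J. \<forall>j\<ge>J. sqrt (TT t (w k j)) \<le> c * (1/2)^k"
    and sums: "hconv (\<lambda>m. \<Sum>k<m. d k) L"
    and c: "0 \<le> c"
  shows "\<exists>Z. adm t L Z \<and> (\<forall>j. sqrt (TT t (Z j)) \<le> 2 * c)"
proof -
  define PP where "PP k e N \<longleftrightarrow> (\<forall>a\<ge>N. \<forall>b\<ge>N. TT t (w k a - w k b) < e^2 \<and> hnorm (w k a - d k) < e
      \<and> sqrt (TT t (w k a)) \<le> c * (1/2)^k)" for k e N
  have ex: "\<exists>N. PP k e N" if e: "0 < e" for k e
  proof -
    obtain N1 where N1: "\<forall>a\<ge>N1. \<forall>b\<ge>N1. TT t (w k a - w k b) < e^2"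
      using adm[of k] e unfolding adm_def tcauchy_def by (meson zero_less_power)
    obtain N2 where N2: "\<forall>a\<ge>N2. hnorm (w k a - d k) < e"
      using adm[of k] e unfolding adm_def hconv_iff by blast
    obtain N3 where N3: "\<forall>j\<ge>N3. sqrt (TT t (w k j)) \<le> c * (1/2)^k" using bnd by blast
    have "PP k e (max N1 (max N2 N3))" unfolding PP_def using N1 N2 N3 by simp
    thus ?thesis by blast
  qed
  have "\<forall>k. \<exists>f. \<forall>e. 0 < e \<longrightarrow> PP k e (f e)"
  proof
    fix k show "\<exists>f. \<forall>e. 0 < e \<longrightarrow> PP k e (f e)" by (rule choice) (use ex in blast)
  qed
  hence "\<exists>Nf. \<forall>k. \<forall>e. 0 < e \<longrightarrow> PP k e (Nf k e)" by (rule choice)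
  then obtain Nf where Nf: "\<And>k e. 0 < e \<Longrightarrow> PP k e (Nf k e)" by blast
  define ep where "ep i = (1/2::real)^i / (real i + 1)" for i
  have ep_pos: "0 < ep i" for i by (simp add: ep_def)
  define m where "m j = (\<Sum>i\<le>j. \<Sum>k\<le>i. Nf k (ep i))" for j
  have m_ge: "Nf k (ep i) \<le> m j" if "k \<le> i" "i \<le> j" for k i j
  proof -
    have "Nf k (ep i) \<le> (\<Sum>k\<le>i. Nf k (ep i))" using that by (intro member_le_sum) auto
    also have "\<dots> \<le> m j" unfolding m_def using that by (intro member_le_sum) auto
    finally show ?thesis .
  qed
  have PPm: "PP k (ep i) (m j)" if "k \<le> i" "i \<le> j" for k i j
  proof -
    have "PP k (ep i) (Nf k (ep i))" using Nf ep_pos by blast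
    thus ?thesis using m_ge[OF that] unfolding PP_def by (meson order_trans)
  qed
  define Z where "Z j = (\<Sum>k\<le>j. w k (m j))" for j
  have wD: "w k a \<in> fdom t" for k a using adm[of k] tc_D[OF S P] unfolding adm_def by blast
  have ZD: "Z j \<in> fdom t" for j unfolding Z_def by (rule subsp_sum[OF Dsub[OF S P]]) (rule wD)
  have Zb: "sqrt (TT t (Z j)) \<le> 2 * c" for j
  proof -
    have "sqrt (TT t (Z j)) \<le> (\<Sum>k\<le>j. sqrt (TT t (w k (m j))))" unfolding Z_def
      by (rule tri_sum[OF S P]) (simp add: wD)
    also have "\<dots> \<le> (\<Sum>k\<le>j. c * (1/2)^k)"
    proof (rule sum_mono)
      fix k assume "k \<in> {..j}"
      hence "PP k (ep k) (m j)" using PPm by simp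
      thus "sqrt (TT t (w k (m j))) \<le> c * (1/2)^k" unfolding PP_def by (meson order_refl)
    qed
    also have "\<dots> = c * (\<Sum>k\<le>j. (1/2)^k)" by (simp add: sum_distrib_left)
    also have "\<dots> \<le> c * 2" using geo_le2 c by (intro mult_left_mono) auto
    finally show ?thesis by simp
  qed
  have Zdiff: "sqrt (TT t (Z j' - Z j)) \<le> (1 + c) * (1/2)^j" if jj: "j \<le> j'" for j j'
  proof -
    have fin: "{..j} \<subseteq> {..j'}" using jj by auto
    have sd: "{..j'} - {..j} = {j<..j'}" by auto
    have "Z j' = (\<Sum>k\<in>{j<..j'}. w k (m j')) + (\<Sum>k\<le>j. w k (m j'))"
      unfolding Z_def using sum.subset_diff[OF fin, of "\<lambda>k. w k (m j')"] unfolding sd by simp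
    hence eq: "Z j' - Z j = (\<Sum>k\<le>j. w k (m j') - w k (m j)) + (\<Sum>k\<in>{j<..j'}. w k (m j'))"
      unfolding Z_def by (simp add: sum_subtractf algebra_simps)
    have d1: "(\<Sum>k\<le>j. w k (m j') - w k (m j)) \<in> fdom t"
      by (rule subsp_sum[OF Dsub[OF S P]], rule subsp_diff[OF Dsub[OF S P] wD wD])
    have d2: "(\<Sum>k\<in>{j<..j'}. w k (m j')) \<in> fdom t"
      by (rule subsp_sum[OF Dsub[OF S P]]) (rule wD)
    have "sqrt (TT t (\<Sum>k\<le>j. w k (m j') - w k (m j))) \<le> (\<Sum>k\<le>j. sqrt (TT t (w k (m j') - w k (m j))))"
      by (rule tri_sum[OF S P]) (simp add: wD subsp_diff[OF Dsub[OF S P]])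
    also have "\<dots> \<le> (\<Sum>k\<le>j. ep j)"
    proof (rule sum_mono)
      fix k assume "k \<in> {..j}"
      hence p: "PP k (ep j) (m j)" using PPm by simp
      have "m j \<le> m j'" using jj unfolding m_def by (intro sum_mono2) auto
      hence "TT t (w k (m j') - w k (m j)) < (ep j)^2" using p unfolding PP_def by (meson order_refl)
      hence "sqrt (TT t (w k (m j') - w k (m j))) < sqrt ((ep j)^2)" by (rule real_sqrt_less_mono)
      thus "sqrt (TT t (w k (m j') - w k (m j))) \<le> ep j" using ep_pos[of j] by simp
    qed
    also have "\<dots> = (1/2)^j" by (simp add: ep_def add.commute)
    finally have b1: "sqrt (TT t (\<Sum>k\<le>j. w k (m j') - w k (m j))) \<le> (1/2)^j" .
    have "sqrt (TT t (\<Sum>k\<in>{j<..j'}. w k (m j'))) \<le> (\<Sum>k\<in>{j<..j'}. sqrt (TT t (w k (m j'))))"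
      by (rule tri_sum[OF S P]) (simp add: wD)
    also have "\<dots> \<le> (\<Sum>k\<in>{j<..j'}. c * (1/2)^k)"
    proof (rule sum_mono)
      fix k assume "k \<in> {j<..j'}"
      hence "PP k (ep k) (m j')" using PPm by simp
      thus "sqrt (TT t (w k (m j'))) \<le> c * (1/2)^k" unfolding PP_def by (meson order_refl)
    qed
    also have "(\<Sum>k\<in>{j<..j'}. c * (1/2::real)^k) = c * (\<Sum>k\<in>{j<..j'}. (1/2)^k)" by (simp add: sum_distrib_left)
    also have "\<dots> \<le> c * (1/2)^j" using geo_tail_le c by (intro mult_left_mono) auto
    finally have b2: "sqrt (TT t (\<Sum>k\<in>{j<..j'}. w k (m j'))) \<le> c * (1/2)^j" .
    have "sqrt (TT t (Z j' - Z j)) \<le> sqrt (TT t (\<Sum>k\<le>j. w k (m j') - w k (m j))) + sqrt (TT t (\<Sum>k\<in>{j<..j'}. w k (m j')))"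
      unfolding eq by (rule tri[OF S P d1 d2])
    thus ?thesis using b1 b2 by (simp add: algebra_simps)
  qed
  have tcZ: "tcauchy t Z"
    unfolding tcauchy_def
  proof (intro conjI allI impI)
    fix n show "Z n \<in> fdom t" by (rule ZD)
  next
    fix e :: real assume e: "0 < e"
    have "0 < sqrt e / (1 + c)" using e c by simp
    then obtain N where N: "\<forall>n\<ge>N. (1/2::real)^n < sqrt e / (1 + c)" using half_pow_small by blast
    show "\<exists>N. \<forall>j'\<ge>N. \<forall>j\<ge>N. TT t (Z j' - Z j) < e"
    proof (intro exI allI impI)
      fix a b assume ab: "N \<le> a" "N \<le> b"
      have key: "sqrt (TT t (Z j' - Z j)) < sqrt e" if "j \<le> j'" "N \<le> j" for j j'
      proof -
        have "sqrt (TT t (Z j' - Z j)) \<le> (1 + c) * (1/2)^j" by (rule Zdiff[OF that(1)])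
        also have "\<dots> < (1 + c) * (sqrt e / (1 + c))" using N that c by (intro mult_strict_left_mono) auto
        also have "\<dots> = sqrt e" using c by simp
        finally show ?thesis .
      qed
      have "sqrt (TT t (Z a - Z b)) < sqrt e"
      proof (cases "b \<le> a")
        case True thus ?thesis using key ab by blast
      next
        case False
        hence "sqrt (TT t (Z b - Z a)) < sqrt e" using key ab by simp
        thus ?thesis using q_sym[OF S P ZD ZD] by simp
      qed
      thus "TT t (Z a - Z b) < e" by simp
    qed
  qed
  have hZ: "hconv Z L"
    unfolding hconv_def
  proof (rule real_tendsto_sandwich[rotated 2, OF tendsto_const])
    show "(\<lambda>j. (1/2::real)^j + hnorm ((\<Sum>k<Suc j. d k) - L)) \<longlonglongrightarrow> 0"
    proof -
      have "(\<lambda>j. hnorm ((\<Sum>k<Suc j. d k) - L)) \<longlonglongrightarrow> 0"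
        using sums unfolding hconv_def by (rule LIMSEQ_Suc)
      moreover have "(\<lambda>j. (1/2::real)^j) \<longlonglongrightarrow> 0" by (rule LIMSEQ_power_zero) simp
      ultimately show ?thesis using tendsto_add by fastforce
    qed
    show "\<forall>\<^sub>F j in sequentially. 0 \<le> hnorm (Z j - L)" by (simp add: hnorm_nonneg)
    show "\<forall>\<^sub>F j in sequentially. hnorm (Z j - L) \<le> (1/2)^j + hnorm ((\<Sum>k<Suc j. d k) - L)"
    proof (intro always_eventually allI)
      fix j
      have "Z j - L = (\<Sum>k\<le>j. w k (m j) - d k) + ((\<Sum>k<Suc j. d k) - L)"
        unfolding Z_def lessThan_Suc_atMost by (simp add: sum_subtractf)
      hence "hnorm (Z j - L) \<le> hnorm (\<Sum>k\<le>j. w k (m j) - d k) + hnorm ((\<Sum>k<Suc j. d k) - L)"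
        using hnorm_tri by metis
      also have "hnorm (\<Sum>k\<le>j. w k (m j) - d k) \<le> (\<Sum>k\<le>j. hnorm (w k (m j) - d k))" by (rule hnorm_sum)
      also have "\<dots> \<le> (\<Sum>k\<le>j. ep j)"
      proof (rule sum_mono)
        fix k assume "k \<in> {..j}"
        hence "PP k (ep j) (m j)" using PPm by simp
        thus "hnorm (w k (m j) - d k) \<le> ep j" unfolding PP_def by (meson order_refl less_imp_le)
      qed
      also have "\<dots> = (1/2)^j" by (simp add: ep_def add.commute)
      finally show "hnorm (Z j - L) \<le> (1/2)^j + hnorm ((\<Sum>k<Suc j. d k) - L)" by simp
    qed
  qed
  show ?thesis using tcZ hZ Zb unfolding adm_def by blast
qed

end


definition sB :: "'a::complex_inner sform \<Rightarrow> 'a \<Rightarrow> 'a \<Rightarrow> complex" where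
  "sB t = (SOME B. sesq_on (Dt t) B \<and> (\<forall>x\<in>Dt t. B x x = complex_of_real (st t x)))"

definition restr :: "'a::complex_inner set \<Rightarrow> ('a \<Rightarrow> 'a \<Rightarrow> complex) \<Rightarrow> 'a sform" where
  "restr D B = (D, \<lambda>x y. if x \<in> D \<and> y \<in> D then B x y else 0)"

lemma fdom_restr [simp]: "fdom (restr D B) = D" by (simp add: restr_def fdom_def)
lemma fval_restr: "fval (restr D B) x y = (if x \<in> D \<and> y \<in> D then B x y else 0)"
  by (simp add: restr_def fval_def)

lemma sesq_subset: assumes "sesq_on E B" "lin_subspace D" "D \<subseteq> E" shows "sesq_on D B"
  using assms unfolding sesq_on_def by blast

lemma restr_sesq: assumes "sesq_on D B" shows "is_sesq_form (restr D B)"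
proof -
  have sub: "lin_subspace D" using assms by (simp add: sesq_on_def)
  show ?thesis unfolding is_sesq_form_def fdom_restr fval_restr
    using assms sub subsp_add[OF sub] subsp_scale[OF sub] unfolding sesq_on_def by auto
qed

lemma tnorm_eq: assumes "x \<in> fdom s"
  shows "tnorm s x = sqrt (qf (fval s) x + (1 + lower_bound_form s) * (hnorm x)^2)"
  unfolding tnorm_def qf_def hnorm_sq by simp

lemma lb_nonneg: assumes "positive_form s" "u \<in> fdom s" "hnorm u = 1"
  shows "0 \<le> lower_bound_form s"
  unfolding lower_bound_form_def
  using assms by (intro cInf_greatest) (auto simp: positive_form_def)

context
  fixes s :: "'a::complex_inner sform"
  assumes Ps: "positive_form s" and m0: "0 \<le> lower_bound_form s"
begin

lemma qs_nonneg: "x \<in> fdom s \<Longrightarrow> 0 \<le> qf (fval s) x"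
  using Ps by (simp add: positive_form_def qf_def)

lemma q_le_tn: "x \<in> fdom s \<Longrightarrow> qf (fval s) x \<le> (tnorm s x)^2"
  using qs_nonneg m0 by (simp add: tnorm_eq)

lemma h_le_tn: assumes "x \<in> fdom s" shows "hnorm x \<le> tnorm s x"
proof -
  have "(hnorm x)^2 \<le> qf (fval s) x + (1 + lower_bound_form s) * (hnorm x)^2"
    using qs_nonneg[OF assms] m0 by (simp add: mult_le_cancel_right1 add_increasing)
  hence "sqrt ((hnorm x)^2) \<le> tnorm s x" unfolding tnorm_eq[OF assms] by (rule real_sqrt_le_mono)
  thus ?thesis using hnorm_nonneg by simp
qed

lemma tn_small: assumes "x \<in> fdom s" "qf (fval s) x < e^2 / 2" "hnorm x < e / sqrt (2 * (1 + lower_bound_form s))" "0 < e"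
  shows "tnorm s x < e"
proof -
  let ?m = "1 + lower_bound_form s"
  have mp: "0 < ?m" using m0 by simp
  have "(hnorm x)^2 < (e / sqrt (2 * ?m))^2"
    using assms(3) hnorm_nonneg by (intro power_strict_mono) auto
  also have "\<dots> = e^2 / (2 * ?m)" using mp by (simp add: power_divide)
  finally have hlt: "(hnorm x)^2 < e^2 / (2 * ?m)" .
  have "?m * (hnorm x)^2 < ?m * (e^2 / (2 * ?m))" by (rule mult_strict_left_mono[OF hlt mp])
  also have "\<dots> = e^2 / 2" using mp by (simp add: field_simps)
  finally have "qf (fval s) x + ?m * (hnorm x)^2 < e^2" using assms(2) by simp
  hence "tnorm s x < sqrt (e^2)" unfolding tnorm_eq[OF assms(1)] by (rule real_sqrt_less_mono)
  thus ?thesis using assms(4) by simp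
qed

end

lemma closable_crit:
  fixes r :: "'a::complex_inner sform"
  assumes cl: "is_closable_form r" and subr: "lin_subspace (fdom r)"
    and u1: "u1 \<in> fdom r" "hnorm u1 = 1"
    and uD: "\<And>n. u n \<in> fdom r"
    and uc: "\<forall>e>0. \<exists>N. \<forall>m\<ge>N. \<forall>n\<ge>N. qf (fval r) (u m - u n) < e"
    and u0: "hconv u 0"
  shows "(\<lambda>n. qf (fval r) (u n)) \<longlonglongrightarrow> 0"
proof -
  obtain s where s: "is_sesq_form s" "positive_form s" "is_closed_form s" "fdom r \<subseteq> fdom s"
    "\<forall>x\<in>fdom r. \<forall>y\<in>fdom r. fval s x y = fval r x y"
    using cl unfolding is_closable_form_def by blast
  have m0: "0 \<le> lower_bound_form s" using lb_nonneg[OF s(2)] u1 s(4) by blast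
  have subs: "lin_subspace (fdom s)" using s(1) by (simp add: is_sesq_form_def)
  have qeq: "qf (fval s) x = qf (fval r) x" if "x \<in> fdom r" for x
    using s(5) that by (simp add: qf_def)
  have usD: "u n \<in> fdom s" for n using uD s(4) by blast
  let ?m = "1 + lower_bound_form s"
  have tc: "\<forall>e>0. \<exists>N. \<forall>m\<ge>N. \<forall>n\<ge>N. tnorm s (u m - u n) < e"
  proof (intro allI impI)
    fix e :: real assume e: "0 < e"
    have e2: "0 < e^2 / 2" using e by simp
    obtain N1 where N1: "\<forall>m\<ge>N1. \<forall>n\<ge>N1. qf (fval r) (u m - u n) < e^2 / 2" using uc e2 by blast
    have e3: "0 < e / sqrt (2 * ?m) / 2" using e m0 by simp
    obtain N2 where N2: "\<forall>n\<ge>N2. hnorm (u n - 0) < e / sqrt (2 * ?m) / 2"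
      using u0 e3 unfolding hconv_iff by blast
    show "\<exists>N. \<forall>m\<ge>N. \<forall>n\<ge>N. tnorm s (u m - u n) < e"
    proof (intro exI allI impI)
      fix a b assume ab: "max N1 N2 \<le> a" "max N1 N2 \<le> b"
      have dD: "u a - u b \<in> fdom r" using uD subsp_diff[OF subr] by blast
      have "hnorm (u a - u b) \<le> hnorm (u a) + hnorm (u b)" by (rule hnorm_tri_diff)
      also have "\<dots> < e / sqrt (2 * ?m) / 2 + e / sqrt (2 * ?m) / 2" using N2 ab by (intro add_strict_mono) auto
      finally have h: "hnorm (u a - u b) < e / sqrt (2 * ?m)" by simp
      have q: "qf (fval s) (u a - u b) < e^2 / 2" using N1 ab qeq[OF dD] by simp
      show "tnorm s (u a - u b) < e" by (rule tn_small[OF s(2) m0 _ q h e]) (use dD s(4) in blast)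
    qed
  qed
  obtain L where L: "L \<in> fdom s" "\<forall>e>0. \<exists>N. \<forall>n\<ge>N. tnorm s (u n - L) < e"
    using s(3) usD tc unfolding is_closed_form_def by blast
  have "hconv u L" unfolding hconv_iff
  proof (intro allI impI)
    fix e :: real assume "0 < e"
    then obtain N where N: "\<forall>n\<ge>N. tnorm s (u n - L) < e" using L by blast
    have "hnorm (u n - L) \<le> tnorm s (u n - L)" for n
      using h_le_tn[OF s(2) m0] subsp_diff[OF subs usD L(1)] by blast
    thus "\<exists>N. \<forall>n\<ge>N. hnorm (u n - L) < e" using N by (meson le_less_trans)
  qed
  hence L0: "L = 0" using hconv_unique u0 by blast
  show ?thesis unfolding lim_sequentially
  proof (intro allI impI)
    fix e :: real assume e: "0 < e"
    then obtain N where N: "\<forall>n\<ge>N. tnorm s (u n - L) < sqrt e" using L by (meson real_sqrt_gt_zero)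
    show "\<exists>N. \<forall>n\<ge>N. dist (qf (fval r) (u n)) 0 < e"
    proof (intro exI allI impI)
      fix n assume "N \<le> n"
      hence tn: "tnorm s (u n) < sqrt e" using N L0 by simp
      have "qf (fval r) (u n) = qf (fval s) (u n)" using qeq uD by simp
      also have "\<dots> \<le> (tnorm s (u n))^2" by (rule q_le_tn[OF s(2) m0 usD])
      also have "\<dots> < (sqrt e)^2" using tn order_trans[OF hnorm_nonneg h_le_tn[OF s(2) m0 usD]] by (intro power_strict_mono) auto
      also have "\<dots> = e" using e by simp
      finally have "qf (fval r) (u n) < e" .
      moreover have "0 \<le> qf (fval r) (u n)" using qs_nonneg[OF s(2) m0 usD] qeq uD by simp
      ultimately show "dist (qf (fval r) (u n)) 0 < e" by simp
    qed
  qed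
qed

lemma quarter: "sqrt ((1/4::real)^n) = (1/2)^n"
proof -
  have "((1/2::real)^n)^2 = ((1/2)^2)^n" by (metis power_mult mult.commute)
  hence "(1/4::real)^n = ((1/2)^n)^2" by (simp add: power2_eq_square)
  thus ?thesis by simp
qed

context
  fixes t :: "'a::complex_inner sform"
  assumes S: "sesq_on (fdom t) (fval t)" and P: "pos_on (fdom t) (fval t)"
begin

lemma sB_prop: "sesq_on (Dt t) (sB t) \<and> (\<forall>x\<in>Dt t. sB t x x = complex_of_real (st t x))"
  unfolding sB_def by (rule someI_ex[OF st_form_exists[OF S P]])

lemma sB_sesq: "sesq_on (Dt t) (sB t)" using sB_prop by blast
lemma sB_diag: "x \<in> Dt t \<Longrightarrow> sB t x x = complex_of_real (st t x)" using sB_prop by blast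
lemma sB_pos: "pos_on (Dt t) (sB t)" unfolding pos_on_def using sB_diag st_nonneg[OF S P] by simp
lemma sB_q: "x \<in> Dt t \<Longrightarrow> qf (sB t) x = st t x" using sB_diag by (simp add: qf_def)

lemma st_tri: assumes "x \<in> Dt t" "y \<in> Dt t"
  shows "sqrt (st t (x + y)) \<le> sqrt (st t x) + sqrt (st t y)"
  using tri[OF sB_sesq sB_pos assms] sB_q assms subsp_add[OF Dt_sub[OF S P]] by simp

lemma st_neg: "x \<in> Dt t \<Longrightarrow> st t (- x) = st t x"
  using st_hom[OF S P, of x "-1"] by (simp add: scaleC_minus1)

lemma st_complete:
  assumes XD: "\<And>n. X n \<in> Dt t"
   and Xc: "\<forall>e>0. \<exists>N. \<forall>a\<ge>N. \<forall>b\<ge>N. st t (X a - X b) < e"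
   and XL: "hconv X L"
  shows "L \<in> Dt t \<and> (\<forall>e>0. \<exists>N. \<forall>n\<ge>N. st t (X n - L) < e)"
proof -
  have DtS: "lin_subspace (Dt t)" by (rule Dt_sub[OF S P])
  have "\<forall>k. \<exists>N. \<forall>a\<ge>N. \<forall>b\<ge>N. st t (X a - X b) < (1/4)^k" using Xc by simp
  then obtain Nk where Nk: "\<And>k a b. Nk k \<le> a \<Longrightarrow> Nk k \<le> b \<Longrightarrow> st t (X a - X b) < (1/4)^k"
    by metis
  define nk where "nk k = k + (\<Sum>i\<le>k. Nk i)" for k
  have nk_ge: "Nk k \<le> nk k" for k
  proof -
    have "Nk k \<le> (\<Sum>i\<le>k. Nk i)" by (intro member_le_sum) auto
    thus ?thesis unfolding nk_def by simp
  qed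
  have nk_ge2: "k \<le> nk k" for k unfolding nk_def by simp
  have nk_mono: "nk k \<le> nk (Suc k)" for k unfolding nk_def by simp
  define d where "d k = X (nk (Suc k)) - X (nk k)" for k
  have dD: "d k \<in> Dt t" for k unfolding d_def using XD subsp_diff[OF DtS] by blast
  have dst: "st t (d k) < (1/4)^k" for k
    unfolding d_def using nk_ge[of k] nk_mono[of k] by (intro Nk) auto
  have "\<forall>k. \<exists>z. adm t (d k) z \<and> limT t z < (1/4)^k"
  proof
    fix k
    have "0 < (1/4)^k - st t (d k)" using dst[of k] by simp
    then obtain z where "adm t (d k) z" "limT t z < st t (d k) + ((1/4)^k - st t (d k))"
      using st_approx[OF S P dD] by blast
    thus "\<exists>z. adm t (d k) z \<and> limT t z < (1/4)^k" by auto
  qed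
  then obtain w where w: "\<And>k. adm t (d k) (w k)" "\<And>k. limT t (w k) < (1/4)^k" by metis
  have tail: "L - X (nk K) \<in> Dt t \<and> st t (L - X (nk K)) \<le> 4 * (1/4)^K" for K
  proof -
    define c :: real where "c = (1/2)^K"
    have c0: "0 \<le> c" unfolding c_def by simp
    have bnd: "\<exists>J. \<forall>j\<ge>J. sqrt (TT t (w (K + k) j)) \<le> c * (1/2)^k" for k
    proof -
      have "(\<lambda>j. TT t (w (K + k) j)) \<longlonglongrightarrow> limT t (w (K + k))"
        using tc_conv[OF S P] w(1) unfolding adm_def by blast
      moreover have "limT t (w (K + k)) < (1/4)^(K + k)" by (rule w(2))
      ultimately have "eventually (\<lambda>j. TT t (w (K + k) j) < (1/4)^(K + k)) sequentially"
        by (rule order_tendstoD(2))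
      then obtain J where J: "\<forall>j\<ge>J. TT t (w (K + k) j) < (1/4)^(K + k)"
        unfolding eventually_sequentially by blast
      have "sqrt (TT t (w (K + k) j)) \<le> c * (1/2)^k" if "J \<le> j" for j
      proof -
        have "sqrt (TT t (w (K + k) j)) \<le> sqrt ((1/4)^(K + k))" using J that by (simp add: less_imp_le)
        also have "\<dots> = c * (1/2)^k" unfolding quarter c_def by (simp add: power_add)
        finally show ?thesis .
      qed
      thus ?thesis by blast
    qed
    have sumeq: "(\<Sum>k<m. d (K + k)) = X (nk (K + m)) - X (nk K)" for m
    proof (induction m)
      case 0 show ?case by simp
    next
      case (Suc m)
      thus ?case by (simp add: d_def)
    qed
    have sums: "hconv (\<lambda>m. \<Sum>k<m. d (K + k)) (L - X (nk K))"
      unfolding hconv_iff sumeq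
    proof (intro allI impI)
      fix e :: real assume "0 < e"
      then obtain N where N: "\<forall>n\<ge>N. hnorm (X n - L) < e" using XL unfolding hconv_iff by blast
      show "\<exists>N. \<forall>n\<ge>N. hnorm (X (nk (K + n)) - X (nk K) - (L - X (nk K))) < e"
      proof (intro exI allI impI)
        fix n assume "N \<le> n"
        hence "N \<le> nk (K + n)" using nk_ge2[of "K + n"] by simp
        thus "hnorm (X (nk (K + n)) - X (nk K) - (L - X (nk K))) < e" using N by simp
      qed
    qed
    obtain Z where Z: "adm t (L - X (nk K)) Z" "\<forall>j. sqrt (TT t (Z j)) \<le> 2 * c"
      using telescope[OF S P, of "\<lambda>k. d (K + k)" "\<lambda>k. w (K + k)" c "L - X (nk K)"] w(1) bnd sums c0
      by blast
    have inD: "L - X (nk K) \<in> Dt t" using Z(1) unfolding Dt_def by blast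
    have "st t (L - X (nk K)) \<le> limT t Z" by (rule st_le[OF S P Z(1)])
    also have "\<dots> \<le> (2 * c)^2"
    proof (rule LIMSEQ_le_const2)
      show "(\<lambda>j. TT t (Z j)) \<longlonglongrightarrow> limT t Z" using tc_conv[OF S P] Z(1) unfolding adm_def by blast
      show "\<exists>N. \<forall>n\<ge>N. TT t (Z n) \<le> (2 * c)^2"
      proof (intro exI allI impI)
        fix n
        have z0: "0 \<le> TT t (Z n)" using T_nonneg[OF S P] tc_D[OF S P] Z(1) unfolding adm_def by blast
        have "sqrt (TT t (Z n)) \<le> 2 * c" using Z(2) by blast
        hence "(sqrt (TT t (Z n)))^2 \<le> (2 * c)^2" using z0 by (intro power_mono) auto
        thus "TT t (Z n) \<le> (2 * c)^2" using z0 by simp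
      qed
    qed
    also have "(2 * c)^2 = 4 * (1/4)^K"
    proof -
      have "((1/2::real)^K)^2 = (1/4)^K" by (simp add: power2_eq_square power_mult_distrib[symmetric])
      thus ?thesis unfolding c_def by (simp add: power_mult_distrib)
    qed
    finally show ?thesis using inD by simp
  qed
  have LD: "L \<in> Dt t"
  proof -
    have "X (nk 0) + (L - X (nk 0)) \<in> Dt t" using XD tail[of 0] subsp_add[OF DtS] by blast
    thus ?thesis by simp
  qed
  have conv: "\<exists>N. \<forall>n\<ge>N. st t (X n - L) < e" if e: "0 < e" for e
  proof -
    have "0 < sqrt e / 3" using e by simp
    then obtain K where K: "(1/2::real)^K < sqrt e / 3" using half_pow_small by blast
    show ?thesis
    proof (intro exI allI impI)
      fix n assume n: "nk K \<le> n"
      have a1: "X n - X (nk K) \<in> Dt t" "X (nk K) - L \<in> Dt t" using XD LD subsp_diff[OF DtS] by blast+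
      have "st t (X n - X (nk K)) < (1/4)^K" using n nk_ge[of K] by (intro Nk) auto
      hence s1: "sqrt (st t (X n - X (nk K))) < (1/2)^K" using quarter real_sqrt_less_mono by metis
      have "st t (X (nk K) - L) = st t (L - X (nk K))" using st_neg[of "L - X (nk K)"] tail[of K] by simp
      hence "st t (X (nk K) - L) \<le> 4 * (1/4)^K" using tail[of K] by simp
      hence "sqrt (st t (X (nk K) - L)) \<le> sqrt (4 * (1/4)^K)" by (rule real_sqrt_le_mono)
      also have "\<dots> = 2 * (1/2)^K" by (simp add: real_sqrt_mult quarter)
      finally have s2: "sqrt (st t (X (nk K) - L)) \<le> 2 * (1/2)^K" .
      have "sqrt (st t (X n - L)) \<le> sqrt (st t (X n - X (nk K))) + sqrt (st t (X (nk K) - L))"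
        using st_tri[OF a1] by simp
      also have "\<dots> < 3 * (1/2)^K" using s1 s2 by simp
      also have "\<dots> < sqrt e" using K by simp
      finally have "sqrt (st t (X n - L)) < sqrt e" .
      thus "st t (X n - L) < e" by simp
    qed
  qed
  show ?thesis using LD conv by blast
qed

end

lemma sext_closed:
  fixes t :: "'a::chilbert sform"
  assumes S: "sesq_on (fdom t) (fval t)" and P: "pos_on (fdom t) (fval t)"
    and u1: "u1 \<in> fdom t" "hnorm u1 = 1"
  shows "is_closed_form (restr (Dt t) (sB t))"
proof -
  let ?s = "restr (Dt t) (sB t)"
  have ps: "positive_form ?s" unfolding positive_form_def fval_restr fdom_restr
    using sB_pos[OF S P] unfolding pos_on_def by simp
  have m0: "0 \<le> lower_bound_form ?s" using lb_nonneg[OF ps] u1 DD_Dt[OF S P] by force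
  have qs: "qf (fval ?s) x = st t x" if "x \<in> Dt t" for x
    using that sB_q[OF S P] by (simp add: qf_def fval_restr)
  have DtS: "lin_subspace (Dt t)" by (rule Dt_sub[OF S P])
  show ?thesis unfolding is_closed_form_def
  proof (intro conjI ps allI impI)
    fix X :: "nat \<Rightarrow> 'a"
    assume a: "(\<forall>n. X n \<in> fdom ?s) \<and> (\<forall>e>0. \<exists>N. \<forall>m\<ge>N. \<forall>n\<ge>N. tnorm ?s (X m - X n) < e)"
    have XD: "\<And>n. X n \<in> Dt t" using a by simp
    have Xc: "\<forall>e>0. \<exists>N. \<forall>a\<ge>N. \<forall>b\<ge>N. st t (X a - X b) < e"
    proof (intro allI impI)
      fix e :: real assume e: "0 < e"
      then obtain N where N: "\<forall>m\<ge>N. \<forall>n\<ge>N. tnorm ?s (X m - X n) < sqrt e" using a by (meson real_sqrt_gt_zero)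
      show "\<exists>N. \<forall>a\<ge>N. \<forall>b\<ge>N. st t (X a - X b) < e"
      proof (intro exI allI impI)
        fix m n assume mn: "N \<le> m" "N \<le> n"
        have dD: "X m - X n \<in> Dt t" using XD subsp_diff[OF DtS] by blast
        have tn0: "0 \<le> tnorm ?s (X m - X n)" by (rule order_trans[OF hnorm_nonneg h_le_tn[OF ps m0]]) (simp add: dD)
        have "st t (X m - X n) \<le> (tnorm ?s (X m - X n))^2" using q_le_tn[OF ps m0, of "X m - X n"] dD qs[OF dD] by simp
        also have "\<dots> < (sqrt e)^2" using N mn tn0 by (intro power_strict_mono) auto
        finally show "st t (X m - X n) < e" using e by simp
      qed
    qed
    have "\<exists>L. \<forall>e>0. \<exists>N. \<forall>n\<ge>N. sqrt (Re (cinner (X n - L) (X n - L))) < e"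
    proof (rule hilbert_complete, intro allI impI)
      fix e :: real assume e: "0 < e"
      then obtain N where N: "\<forall>m\<ge>N. \<forall>n\<ge>N. tnorm ?s (X m - X n) < e" using a by blast
      show "\<exists>N. \<forall>m\<ge>N. \<forall>n\<ge>N. sqrt (Re (cinner (X m - X n) (X m - X n))) < e"
      proof (intro exI allI impI)
        fix m n assume mn: "N \<le> m" "N \<le> n"
        have dD: "X m - X n \<in> Dt t" using XD subsp_diff[OF DtS] by blast
        have "hnorm (X m - X n) \<le> tnorm ?s (X m - X n)" using h_le_tn[OF ps m0] dD by simp
        thus "sqrt (Re (cinner (X m - X n) (X m - X n))) < e" using N mn unfolding hnorm_def by fastforce
      qed
    qed
    then obtain L where "\<forall>e>0. \<exists>N. \<forall>n\<ge>N. hnorm (X n - L) < e" unfolding hnorm_def by blast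
    hence XL: "hconv X L" unfolding hconv_iff .
    obtain LD: "L \<in> Dt t" and Lc: "\<forall>e>0. \<exists>N. \<forall>n\<ge>N. st t (X n - L) < e"
      using st_complete[OF S P XD Xc XL] by blast
    show "\<exists>L\<in>fdom ?s. \<forall>e>0. \<exists>N. \<forall>n\<ge>N. tnorm ?s (X n - L) < e"
    proof (intro bexI allI impI)
      show "L \<in> fdom ?s" using LD by simp
      fix e :: real assume e: "0 < e"
      have "0 < e^2 / 2" using e by simp
      then obtain N1 where N1: "\<forall>n\<ge>N1. st t (X n - L) < e^2 / 2" using Lc by blast
      have "0 < e / sqrt (2 * (1 + lower_bound_form ?s))" using e m0 by simp
      then obtain N2 where N2: "\<forall>n\<ge>N2. hnorm (X n - L) < e / sqrt (2 * (1 + lower_bound_form ?s))"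
        using XL unfolding hconv_iff by blast
      show "\<exists>N. \<forall>n\<ge>N. tnorm ?s (X n - L) < e"
      proof (intro exI allI impI)
        fix n assume n: "max N1 N2 \<le> n"
        have dD: "X n - L \<in> Dt t" using XD LD subsp_diff[OF DtS] by blast
        show "tnorm ?s (X n - L) < e"
          by (rule tn_small[OF ps m0]) (use dD N1 N2 n qs e in auto)
      qed
    qed
  qed
qed


definition rpart :: "'a::complex_inner sform \<Rightarrow> 'a sform" where
  "rpart t = restr (fdom t) (sB t)"

lemma cand_le_st:
  fixes t :: "'a::complex_inner sform"
  assumes S: "sesq_on (fdom t) (fval t)" and P: "pos_on (fdom t) (fval t)"
    and u1: "u1 \<in> fdom t" "hnorm u1 = 1"
    and r: "r \<in> regular_candidates t" and x: "x \<in> fdom t"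
  shows "qf (fval r) x \<le> st t x"
proof (rule st_ge[OF S P DD_Dt[OF S P x]])
  fix z assume adm: "adm t x z"
  have rs: "is_sesq_form r" and rp: "positive_form r" and rc: "is_closable_form r"
    and rd: "fdom r = fdom t" and rle: "\<forall>x\<in>fdom t. Re (fval r x x) \<le> Re (fval t x x)"
    using r unfolding regular_candidates_def bilinear_form_def by auto
  have Sr: "sesq_on (fdom t) (fval r)" using sesq_form_on[OF rs] rd by simp
  have Pr: "pos_on (fdom t) (fval r)" using pos_form_on[OF rp] rd by simp
  have subD: "lin_subspace (fdom t)" by (rule Dsub[OF S P])
  have zD: "z n \<in> fdom t" for n using adm tc_D[OF S P] unfolding adm_def by blast
  define u where "u n = x - z n" for n
  have uD: "u n \<in> fdom t" for n unfolding u_def using zD x subsp_diff[OF subD] by blast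
  have qle: "qf (fval r) y \<le> TT t y" if "y \<in> fdom t" for y using rle that by (simp add: qf_def)
  have uc: "\<forall>e>0. \<exists>N. \<forall>m\<ge>N. \<forall>n\<ge>N. qf (fval r) (u m - u n) < e"
  proof (intro allI impI)
    fix e :: real assume "0 < e"
    then obtain N where N: "\<forall>m\<ge>N. \<forall>n\<ge>N. TT t (z m - z n) < e" using adm unfolding adm_def tcauchy_def by blast
    show "\<exists>N. \<forall>m\<ge>N. \<forall>n\<ge>N. qf (fval r) (u m - u n) < e"
    proof (intro exI allI impI)
      fix m n assume mn: "N \<le> m" "N \<le> n"
      have "u m - u n = z n - z m" unfolding u_def by simp
      moreover have "z n - z m \<in> fdom t" using zD subsp_diff[OF subD] by blast
      ultimately have "qf (fval r) (u m - u n) \<le> TT t (z n - z m)" using qle by simp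
      thus "qf (fval r) (u m - u n) < e" using N mn by fastforce
    qed
  qed
  have u0: "hconv u 0"
    using adm unfolding adm_def hconv_def u_def by (simp add: hnorm_sym)
  have lim0: "(\<lambda>n. qf (fval r) (u n)) \<longlonglongrightarrow> 0"
    by (rule closable_crit[OF rc _ _ _ _ uc u0]) (use rs rd u1 uD in \<open>auto simp: is_sesq_form_def\<close>)
  have bnd: "sqrt (qf (fval r) x) \<le> sqrt (TT t (z n)) + sqrt (qf (fval r) (u n))" for n
  proof -
    have "x = z n + u n" unfolding u_def by simp
    hence "sqrt (qf (fval r) x) \<le> sqrt (qf (fval r) (z n)) + sqrt (qf (fval r) (u n))"
      using tri[OF Sr Pr zD uD] by simp
    moreover have "sqrt (qf (fval r) (z n)) \<le> sqrt (TT t (z n))" using qle[OF zD] by simp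
    ultimately show ?thesis by linarith
  qed
  have "(\<lambda>n. sqrt (TT t (z n)) + sqrt (qf (fval r) (u n))) \<longlonglongrightarrow> sqrt (limT t z) + sqrt 0"
    using tc_conv[OF S P] adm lim0 unfolding adm_def by (intro tendsto_intros) auto
  hence "sqrt (qf (fval r) x) \<le> sqrt (limT t z) + sqrt 0"
    by (rule LIMSEQ_le_const) (use bnd in blast)
  hence "sqrt (qf (fval r) x) \<le> sqrt (limT t z)" by simp
  thus "qf (fval r) x \<le> limT t z" by simp
qed

lemma rpart_cand:
  fixes t :: "'a::chilbert sform"
  assumes B: "bilinear_form t" and Pt: "positive_form t"
    and u1: "u1 \<in> fdom t" "hnorm u1 = 1"
  shows "rpart t \<in> regular_candidates t"
proof -
  have tS: "is_sesq_form t" using B by (simp add: bilinear_form_def)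
  have S: "sesq_on (fdom t) (fval t)" by (rule sesq_form_on[OF tS])
  have P: "pos_on (fdom t) (fval t)" by (rule pos_form_on[OF Pt])
  have subD: "lin_subspace (fdom t)" by (rule Dsub[OF S P])
  have DD: "fdom t \<subseteq> Dt t" using DD_Dt[OF S P] by blast
  have Sr: "sesq_on (fdom t) (sB t)" by (rule sesq_subset[OF sB_sesq[OF S P] subD DD])
  have bil: "bilinear_form (rpart t)"
    unfolding bilinear_form_def rpart_def using restr_sesq[OF Sr] B by (simp add: bilinear_form_def)
  have pos: "positive_form (rpart t)"
    unfolding positive_form_def rpart_def fval_restr fdom_restr
    using sB_pos[OF S P] DD unfolding pos_on_def by auto
  have pse: "positive_form (restr (Dt t) (sB t))"
    unfolding positive_form_def fval_restr fdom_restr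
    using sB_pos[OF S P] unfolding pos_on_def by auto
  have clos: "is_closable_form (rpart t)"
    unfolding is_closable_form_def
  proof (intro exI conjI)
    show "is_sesq_form (restr (Dt t) (sB t))" by (rule restr_sesq[OF sB_sesq[OF S P]])
    show "positive_form (restr (Dt t) (sB t))" by (rule pse)
    show "is_closed_form (restr (Dt t) (sB t))" by (rule sext_closed[OF S P u1])
    show "fdom (rpart t) \<subseteq> fdom (restr (Dt t) (sB t))" unfolding rpart_def using DD by simp
    show "\<forall>x\<in>fdom (rpart t). \<forall>y\<in>fdom (rpart t). fval (restr (Dt t) (sB t)) x y = fval (rpart t) x y"
      unfolding rpart_def fval_restr using DD by auto
  qed
  have le: "\<forall>x\<in>fdom t. Re (fval (rpart t) x x) \<le> Re (fval t x x)"
    unfolding rpart_def fval_restr using sB_diag[OF S P] DD st_le_T[OF S P] by (auto simp: qf_def)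
  show ?thesis unfolding regular_candidates_def using bil pos clos le by (simp add: rpart_def)
qed

lemma regular_part_eq:
  fixes t :: "'a::chilbert sform"
  assumes B: "bilinear_form t" and Pt: "positive_form t"
    and u1: "u1 \<in> fdom t" "hnorm u1 = 1"
  shows "regular_part t = rpart t"
proof -
  have tS: "is_sesq_form t" using B by (simp add: bilinear_form_def)
  have S: "sesq_on (fdom t) (fval t)" by (rule sesq_form_on[OF tS])
  have P: "pos_on (fdom t) (fval t)" by (rule pos_form_on[OF Pt])
  have DD: "fdom t \<subseteq> Dt t" using DD_Dt[OF S P] by blast
  have rc: "rpart t \<in> regular_candidates t" by (rule rpart_cand[OF B Pt u1])
  have rdiag: "Re (fval (rpart t) x x) = st t x" if "x \<in> fdom t" for x
    unfolding rpart_def fval_restr using sB_diag[OF S P] DD that by auto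
  have rmax: "\<forall>r'\<in>regular_candidates t. \<forall>x\<in>fdom t. Re (fval r' x x) \<le> Re (fval (rpart t) x x)"
    using cand_le_st[OF S P u1] rdiag by (auto simp: qf_def)
  show ?thesis unfolding regular_part_def
  proof (rule the_equality)
    show "rpart t \<in> regular_candidates t \<and> (\<forall>r'\<in>regular_candidates t. \<forall>x\<in>fdom t. Re (fval r' x x) \<le> Re (fval (rpart t) x x))"
      using rc rmax by blast
  next
    fix r assume a: "r \<in> regular_candidates t \<and> (\<forall>r'\<in>regular_candidates t. \<forall>x\<in>fdom t. Re (fval r' x x) \<le> Re (fval r x x))"
    have rs: "is_sesq_form r" "positive_form r" "fdom r = fdom t"
      using a unfolding regular_candidates_def bilinear_form_def by auto
    have ps: "is_sesq_form (rpart t)" "positive_form (rpart t)" "fdom (rpart t) = fdom t"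
      using rc unfolding regular_candidates_def bilinear_form_def by auto
    have diag: "fval r x x = fval (rpart t) x x" if "x \<in> fdom t" for x
    proof -
      have "Re (fval r x x) = Re (fval (rpart t) x x)" using a rc rmax that by (meson order_antisym)
      moreover have "Im (fval r x x) = 0" "Im (fval (rpart t) x x) = 0"
        using rs ps that unfolding positive_form_def by auto
      ultimately show ?thesis by (simp add: complex_eq_iff)
    qed
    have eqD: "fval r x y = fval (rpart t) x y" if "x \<in> fdom t" "y \<in> fdom t" for x y
      using diag_eq_imp_eq[of "fdom t" "fval r" "fval (rpart t)" x y] sesq_form_on[OF rs(1)] sesq_form_on[OF ps(1)]
        rs ps diag that by simp
    have "fval r x y = fval (rpart t) x y" for x y
    proof (cases "x \<in> fdom t \<and> y \<in> fdom t")
      case True thus ?thesis using eqD by blast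
    next
      case False
      thus ?thesis using rs(1,3) ps(1,3) unfolding is_sesq_form_def by metis
    qed
    hence "fval r = fval (rpart t)" by (intro ext)
    thus "r = rpart t" using rs(3) ps(3) unfolding fval_def fdom_def by (simp add: prod_eq_iff)
  qed
qed


lemma nonzero_vec: assumes "infinite_dimensional (UNIV :: 'a::complex_inner set)"
  shows "\<exists>v::'a. v \<noteq> 0"
proof -
  have "cspan ({}::'a set) \<noteq> UNIV" using assms unfolding infinite_dimensional_def by blast
  then obtain v :: 'a where "v \<notin> cspan {}" by blast
  moreover have "(0::'a) \<in> cspan {}" unfolding cspan_def by (intro CollectI exI[of _ "{}"]) simp
  ultimately have "v \<noteq> 0" by metis
  thus ?thesis by (rule exI)
qed

lemma unit_in_dense:
  assumes v: "(v::'a::complex_inner) \<noteq> 0" and D: "dense_set (D::'a set)" "lin_subspace D"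
  shows "\<exists>u\<in>D. hnorm u = 1"
proof -
  have hv: "0 < hnorm v" using v hnorm_eq_0 hnorm_nonneg by (metis order_le_less)
  obtain y where y: "y \<in> D" "hnorm (v - y) < hnorm v" using D(1) hv unfolding dense_set_def by blast
  have "y \<noteq> 0" using y by auto
  hence hy: "0 < hnorm y" using hnorm_eq_0 hnorm_nonneg by (metis order_le_less)
  let ?u = "scaleC (complex_of_real (1 / hnorm y)) y"
  have "?u \<in> D" using y subsp_scale[OF D(2)] by blast
  moreover have "hnorm ?u = 1" using hy by (simp add: hnorm_scale norm_divide)
  ultimately show ?thesis by blast
qed

lemma Vf_facts:
  assumes "t \<in> Vf"
  shows "is_sesq_form t" "bilinear_form t" "positive_form t" "dense_set (fdom t)"
    "sesq_on (fdom t) (fval t)" "pos_on (fdom t) (fval t)" "lin_subspace (fdom t)"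
    "bounded_form t \<Longrightarrow> fdom t = UNIV"
  using assms unfolding Vf_def bilinear_form_def
  by (auto intro: sesq_form_on pos_form_on simp: is_sesq_form_def)

lemma rp_cand:
  fixes t :: "'a::chilbert sform"
  assumes inf: "infinite_dimensional (UNIV :: 'a set)" and t: "t \<in> Vf"
  shows "regular_part t \<in> regular_candidates t"
proof -
  obtain v :: 'a where v: "v \<noteq> 0" using nonzero_vec[OF inf] by blast
  obtain u where u: "u \<in> fdom t" "hnorm u = 1" using unit_in_dense[OF v] Vf_facts[OF t] by blast
  show ?thesis using regular_part_eq[OF Vf_facts(2,3)[OF t] u] rpart_cand[OF Vf_facts(2,3)[OF t] u] by simp
qed

lemma cand_facts:
  assumes "r \<in> regular_candidates t"
  shows "is_sesq_form r" "positive_form r" "fdom r = fdom t"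
    "sesq_on (fdom t) (fval r)" "pos_on (fdom t) (fval r)"
    "\<And>x. x \<in> fdom t \<Longrightarrow> qf (fval r) x \<le> qf (fval t) x"
    "\<And>x y. \<not> (x \<in> fdom t \<and> y \<in> fdom t) \<Longrightarrow> fval r x y = 0"
proof -
  have a: "bilinear_form r" "positive_form r" "fdom r = fdom t" "\<forall>x\<in>fdom t. Re (fval r x x) \<le> Re (fval t x x)"
    using assms unfolding regular_candidates_def by auto
  have s: "is_sesq_form r" using a(1) by (simp add: bilinear_form_def)
  show "is_sesq_form r" by (rule s)
  show "positive_form r" "fdom r = fdom t" using a by auto
  show "sesq_on (fdom t) (fval r)" using sesq_form_on[OF s] a(3) by simp
  show "pos_on (fdom t) (fval r)" using pos_form_on[OF a(2)] a(3) by simp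
  show "\<And>x. x \<in> fdom t \<Longrightarrow> qf (fval r) x \<le> qf (fval t) x" using a(4) by (simp add: qf_def)
  show "\<And>x y. \<not> (x \<in> fdom t \<and> y \<in> fdom t) \<Longrightarrow> fval r x y = 0"
    using s a(3) unfolding is_sesq_form_def by metis
qed

lemma regular_iff:
  assumes "fdom (regular_part t) = fdom t"
  shows "regular_form t \<longleftrightarrow> (\<forall>x\<in>fdom t. \<forall>y\<in>fdom t. fval t x y = fval (regular_part t) x y)"
  unfolding regular_form_def singular_part_def is_zero_form_def form_diff_def fdom_def fval_def
  using assms by (auto simp: fdom_def)

lemma singular_iff:
  assumes "fdom (regular_part t) = fdom t"
  shows "singular_form t \<longleftrightarrow> (\<forall>x\<in>fdom t. \<forall>y\<in>fdom t. fval (regular_part t) x y = 0)"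
  unfolding singular_form_def is_zero_form_def using assms by simp

lemma fdom_add [simp]: "fdom (form_add t s) = fdom t \<inter> fdom s"
  by (simp add: form_add_def fdom_def)
lemma fval_add: "fval (form_add t s) x y =
   (if x \<in> fdom t \<inter> fdom s \<and> y \<in> fdom t \<inter> fdom s then fval t x y + fval s x y else 0)"
  by (simp add: form_add_def fval_def)

lemma form_add_comm: "form_add t s = form_add s t"
  unfolding form_add_def by (auto simp: Int_commute add.commute intro!: ext)

lemma oplus_bar_comm: "oplus_bar t s = oplus_bar s t"
  unfolding oplus_bar_def oplus_defined_def using form_add_comm[of t s] form_add_comm[of "regular_part t" "regular_part s"] by auto

lemma bounded_quad:
  assumes "bounded_form s" "fdom s = UNIV" "sesq_on UNIV (fval s)" "pos_on UNIV (fval s)"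
  shows "\<exists>K\<ge>0. \<forall>x. qf (fval s) x \<le> K * (hnorm x)^2"
proof -
  obtain K0 where K0: "\<And>x. hnorm x = 1 \<Longrightarrow> Re (fval s x x) \<le> K0"
    using assms(1,2) unfolding bounded_form_def bdd_above_def by auto
  let ?K = "max K0 0"
  have "qf (fval s) x \<le> ?K * (hnorm x)^2" for x
  proof (cases "x = 0")
    case True thus ?thesis using f_zero[OF assms(3)] by (simp add: qf_def)
  next
    case False
    hence hx: "0 < hnorm x" using hnorm_eq_0 hnorm_nonneg by (metis order_le_less)
    let ?u = "scaleC (complex_of_real (1 / hnorm x)) x"
    have "hnorm ?u = 1" using hx by (simp add: hnorm_scale norm_divide)
    hence "qf (fval s) ?u \<le> K0" using K0 by (simp add: qf_def)
    moreover have "qf (fval s) ?u = (1 / hnorm x)^2 * qf (fval s) x"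
      using q_scale[OF assms(3) assms(4) UNIV_I, where c="complex_of_real (1 / hnorm x)" and x=x]
      by (simp add: power_one_over norm_divide)
    ultimately have "(1 / hnorm x)^2 * qf (fval s) x \<le> ?K" by simp
    hence "qf (fval s) x \<le> ?K * (hnorm x)^2" using hx by (simp add: field_simps)
    thus ?thesis .
  qed
  thus ?thesis by (intro exI[of _ ?K]) auto
qed

lemma cont_zero:
  fixes f :: "'a::complex_inner \<Rightarrow> 'a \<Rightarrow> complex"
  assumes S: "sesq_on UNIV f" and P: "pos_on UNIV f" and K: "\<forall>x. qf f x \<le> K * (hnorm x)^2" "0 \<le> K"
    and E: "dense_set E" "\<forall>x\<in>E. qf f x = 0"
  shows "f x y = 0"
proof -
  have qz: "qf f z = 0" for z
  proof -
    have "sqrt (qf f z) \<le> 0"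
    proof (rule field_le_epsilon)
      fix e :: real assume e: "0 < e"
      have "0 < e / (sqrt K + 1)" using e K(2) by (simp add: add_nonneg_pos)
      then obtain y where y: "y \<in> E" "hnorm (z - y) < e / (sqrt K + 1)"
        using E(1) unfolding dense_set_def by blast
      have "z = y + (z - y)" by simp
      hence "sqrt (qf f z) \<le> sqrt (qf f y) + sqrt (qf f (z - y))"
        using tri[OF S P UNIV_I UNIV_I, of y "z - y"] by simp
      also have "\<dots> = sqrt (qf f (z - y))" using E(2) y(1) by simp
      also have "\<dots> \<le> sqrt (K * (hnorm (z - y))^2)" using K(1) by simp
      also have "\<dots> = sqrt K * hnorm (z - y)" by (simp add: real_sqrt_mult)
      also have "\<dots> \<le> sqrt K * (e / (sqrt K + 1))" using y(2) K(2) by (intro mult_left_mono) auto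
      also have "\<dots> \<le> e"
      proof -
        have "sqrt K / (sqrt K + 1) \<le> 1" using K(2) by (simp add: add_nonneg_pos)
        hence "(sqrt K / (sqrt K + 1)) * e \<le> e" using e K(2) by (intro mult_left_le_one_le) auto
        thus ?thesis by (simp add: mult.commute)
      qed
      finally show "sqrt (qf f z) \<le> 0 + e" by simp
    qed
    thus ?thesis using q_nonneg[OF S P UNIV_I, of z] by simp
  qed
  have "\<forall>z\<in>UNIV. f z z = 0" using diag_real[OF S P] qz by simp
  thus ?thesis using diag_zero_imp_zero[OF S] by blast
qed

lemma sesq_diff: "sesq_on D f \<Longrightarrow> sesq_on D g \<Longrightarrow> sesq_on D (\<lambda>x y. f x y - g x y)"
  unfolding sesq_on_def by (auto simp: algebra_simps)

lemma ext_lemma: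
  fixes t s :: "'a::complex_inner sform"
  assumes t: "t \<in> Vf" and s: "s \<in> Vf" and od: "oplus_defined t s"
    and g: "sesq_on (fdom s) g" "pos_on (fdom s) g" "\<forall>x\<in>fdom s. qf g x \<le> qf (fval s) x"
    and z: "\<forall>x\<in>fdom t \<inter> fdom s. \<forall>y\<in>fdom t \<inter> fdom s. g x y = 0"
  shows "\<forall>x\<in>fdom s. \<forall>y\<in>fdom s. g x y = 0"
proof (cases "fdom t = fdom s \<or> bounded_form t")
  case True
  hence "fdom t \<inter> fdom s = fdom s" using Vf_facts(8)[OF t] by auto
  thus ?thesis using z by simp
next
  case False
  hence bs: "bounded_form s" using od unfolding oplus_defined_def by blast
  have U: "fdom s = UNIV" using Vf_facts(8)[OF s bs] .
  obtain K where K: "K \<ge> 0" "\<forall>x. qf (fval s) x \<le> K * (hnorm x)^2"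
    using bounded_quad[OF bs U] Vf_facts(5,6)[OF s] U by auto
  have gS: "sesq_on UNIV g" "pos_on UNIV g" using g U by auto
  have gK: "\<forall>x. qf g x \<le> K * (hnorm x)^2" using g(3) K U by (metis UNIV_I order_trans)
  have gz: "\<forall>x\<in>fdom t. qf g x = 0" using z U by (simp add: qf_def)
  show ?thesis using cont_zero[OF gS gK K(1) Vf_facts(4)[OF t] gz] by blast
qed

context
  fixes inf :: "'h::chilbert itself"
  assumes inf: "infinite_dimensional (UNIV :: 'h set)"
begin

lemma rpf:
  fixes t :: "'h sform"
  assumes "t \<in> Vf"
  shows "fdom (regular_part t) = fdom t" "sesq_on (fdom t) (fval (regular_part t))"
    "pos_on (fdom t) (fval (regular_part t))"
    "\<And>x. x \<in> fdom t \<Longrightarrow> qf (fval (regular_part t)) x \<le> qf (fval t) x"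
  using cand_facts[OF rp_cand[OF inf assms]] by auto

lemma obar:
  fixes t s w :: "'h sform"
  assumes "oplus_bar t s = Some w"
  shows "oplus_defined t s" "w = form_add t s" "regular_part w = form_add (regular_part t) (regular_part s)"
  using assms unfolding oplus_bar_def by (auto split: if_splits)

lemma rp_add_val:
  fixes t s w :: "'h sform"
  assumes t: "t \<in> Vf" and s: "s \<in> Vf" and o: "oplus_bar t s = Some w"
    and xy: "x \<in> fdom t \<inter> fdom s" "y \<in> fdom t \<inter> fdom s"
  shows "fval (regular_part w) x y = fval (regular_part t) x y + fval (regular_part s) x y"
    "fval w x y = fval t x y + fval s x y"
  using xy obar[OF o] rpf(1)[OF t] rpf(1)[OF s] by (auto simp: fval_add)

lemma rp_dom_w:
  fixes t s w :: "'h sform"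
  assumes t: "t \<in> Vf" and s: "s \<in> Vf" and o: "oplus_bar t s = Some w"
  shows "fdom (regular_part w) = fdom w" "fdom w = fdom t \<inter> fdom s"
  using obar[OF o] rpf(1)[OF t] rpf(1)[OF s] by auto

lemma reg_a:
  fixes t s w :: "'h sform"
  assumes t: "t \<in> Vf" and s: "s \<in> Vf" and o: "oplus_bar t s = Some w"
    and rt: "regular_form t" and rs: "regular_form s"
  shows "regular_form w"
proof -
  have et: "\<forall>x\<in>fdom t. \<forall>y\<in>fdom t. fval t x y = fval (regular_part t) x y" using rt regular_iff rpf(1)[OF t] by blast
  have es: "\<forall>x\<in>fdom s. \<forall>y\<in>fdom s. fval s x y = fval (regular_part s) x y" using rs regular_iff rpf(1)[OF s] by blast
  show ?thesis unfolding regular_iff[OF rp_dom_w(1)[OF t s o]] rp_dom_w(2)[OF t s o]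
    using rp_add_val[OF t s o] et es by auto
qed

lemma reg_b:
  fixes t s w :: "'h sform"
  assumes t: "t \<in> Vf" and s: "s \<in> Vf" and o: "oplus_bar t s = Some w"
    and rt: "regular_form t" and rw: "regular_form w"
  shows "regular_form s"
proof -
  have et: "\<forall>x\<in>fdom t. \<forall>y\<in>fdom t. fval t x y = fval (regular_part t) x y" using rt regular_iff rpf(1)[OF t] by blast
  have ew: "\<forall>x\<in>fdom t \<inter> fdom s. \<forall>y\<in>fdom t \<inter> fdom s. fval w x y = fval (regular_part w) x y"
    using rw regular_iff[OF rp_dom_w(1)[OF t s o]] rp_dom_w(2)[OF t s o] by blast
  define g where "g x y = fval s x y - fval (regular_part s) x y" for x y
  have gS: "sesq_on (fdom s) g" unfolding g_def by (rule sesq_diff[OF Vf_facts(5)[OF s] rpf(2)[OF s]])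
  have gP: "pos_on (fdom s) g" unfolding g_def pos_on_def
    using Vf_facts(6)[OF s] rpf(3,4)[OF s] unfolding pos_on_def by (auto simp: qf_def)
  have gq: "\<forall>x\<in>fdom s. qf g x \<le> qf (fval s) x" unfolding g_def
    using rpf(3)[OF s] unfolding pos_on_def by (auto simp: qf_def)
  have gz: "\<forall>x\<in>fdom t \<inter> fdom s. \<forall>y\<in>fdom t \<inter> fdom s. g x y = 0"
    unfolding g_def using ew et rp_add_val[OF t s o] by auto
  have "\<forall>x\<in>fdom s. \<forall>y\<in>fdom s. g x y = 0" by (rule ext_lemma[OF t s obar(1)[OF o] gS gP gq gz])
  thus ?thesis unfolding regular_iff[OF rpf(1)[OF s]] g_def by simp
qed

lemma sing_a:
  fixes t s w :: "'h sform"
  assumes t: "t \<in> Vf" and s: "s \<in> Vf" and o: "oplus_bar t s = Some w"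
    and rt: "singular_form t" and rs: "singular_form s"
  shows "singular_form w"
proof -
  have et: "\<forall>x\<in>fdom t. \<forall>y\<in>fdom t. fval (regular_part t) x y = 0" using rt singular_iff rpf(1)[OF t] by blast
  have es: "\<forall>x\<in>fdom s. \<forall>y\<in>fdom s. fval (regular_part s) x y = 0" using rs singular_iff rpf(1)[OF s] by blast
  show ?thesis unfolding singular_iff[OF rp_dom_w(1)[OF t s o]] rp_dom_w(2)[OF t s o]
    using rp_add_val[OF t s o] et es by auto
qed

lemma sing_b:
  fixes t s w :: "'h sform"
  assumes t: "t \<in> Vf" and s: "s \<in> Vf" and o: "oplus_bar t s = Some w"
    and rt: "singular_form t" and rw: "singular_form w"
  shows "singular_form s"
proof -
  have et: "\<forall>x\<in>fdom t. \<forall>y\<in>fdom t. fval (regular_part t) x y = 0" using rt singular_iff rpf(1)[OF t] by blast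
  have ew: "\<forall>x\<in>fdom t \<inter> fdom s. \<forall>y\<in>fdom t \<inter> fdom s. fval (regular_part w) x y = 0"
    using rw singular_iff[OF rp_dom_w(1)[OF t s o]] rp_dom_w(2)[OF t s o] by blast
  have gq: "\<forall>x\<in>fdom s. qf (fval (regular_part s)) x \<le> qf (fval s) x" using rpf(4)[OF s] by blast
  have gz: "\<forall>x\<in>fdom t \<inter> fdom s. \<forall>y\<in>fdom t \<inter> fdom s. fval (regular_part s) x y = 0"
    using ew et rp_add_val[OF t s o] by auto
  have "\<forall>x\<in>fdom s. \<forall>y\<in>fdom s. fval (regular_part s) x y = 0"
    by (rule ext_lemma[OF t s obar(1)[OF o] rpf(2,3)[OF s] gq gz])
  thus ?thesis unfolding singular_iff[OF rpf(1)[OF s]] .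
qed

lemma zero_Vf: "(zero_form :: 'h sform) \<in> Vf"
proof -
  have d: "dense_set (UNIV :: 'h set)" unfolding dense_set_def
  proof (intro allI impI)
    fix x :: 'h and e :: real assume "0 < e"
    thus "\<exists>y\<in>UNIV. hnorm (x - y) < e" by (intro bexI[of _ x]) auto
  qed
  thus ?thesis
    unfolding Vf_def bilinear_form_def is_sesq_form_def positive_form_def lin_subspace_def
      zero_form_def fdom_def fval_def by auto
qed

lemma zero_rp: "\<forall>x y. fval (regular_part (zero_form :: 'h sform)) x y = 0"
proof -
  have dz: "fdom (zero_form :: 'h sform) = UNIV" "fval (zero_form :: 'h sform) = (\<lambda>x y. 0)"
    by (simp_all add: zero_form_def fdom_def fval_def)
  have S: "sesq_on UNIV (fval (regular_part (zero_form :: 'h sform)))" using rpf(2)[OF zero_Vf] dz by simp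
  have P: "pos_on UNIV (fval (regular_part (zero_form :: 'h sform)))" using rpf(3)[OF zero_Vf] dz by simp
  have q: "qf (fval (regular_part (zero_form :: 'h sform))) x \<le> 0" for x
    using rpf(4)[OF zero_Vf] dz by (simp add: qf_def)
  have "\<forall>z\<in>UNIV. fval (regular_part (zero_form :: 'h sform)) z z = 0"
    using diag_real[OF S P] q q_nonneg[OF S P] by (metis UNIV_I order_antisym of_real_0)
  thus ?thesis using diag_zero_imp_zero[OF S] by blast
qed

lemma zero_reg: "regular_form (zero_form :: 'h sform)"
  unfolding regular_iff[OF rpf(1)[OF zero_Vf]] using zero_rp by (simp add: zero_form_def fval_def)

lemma zero_sing: "singular_form (zero_form :: 'h sform)"
  unfolding singular_iff[OF rpf(1)[OF zero_Vf]] using zero_rp by simp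

lemma core_R:
  fixes t s w :: "'h sform"
  assumes v: "t \<in> Vf" "s \<in> Vf" and o: "oplus_bar t s = Some w"
    and h: "(regular_form t \<and> regular_form s) \<or> (regular_form t \<and> regular_form w) \<or> (regular_form s \<and> regular_form w)"
  shows "regular_form t \<and> regular_form s \<and> regular_form w"
proof -
  have o': "oplus_bar s t = Some w" using o oplus_bar_comm by metis
  show ?thesis using h reg_a[OF v(1,2) o] reg_b[OF v(1,2) o] reg_b[OF v(2,1) o'] by blast
qed

lemma core_S:
  fixes t s w :: "'h sform"
  assumes v: "t \<in> Vf" "s \<in> Vf" and o: "oplus_bar t s = Some w"
    and h: "(singular_form t \<and> singular_form s) \<or> (singular_form t \<and> singular_form w) \<or> (singular_form s \<and> singular_form w)"
  shows "singular_form t \<and> singular_form s \<and> singular_form w"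
proof -
  have o': "oplus_bar s t = Some w" using o oplus_bar_comm by metis
  show ?thesis using h sing_a[OF v(1,2) o] sing_b[OF v(1,2) o] sing_b[OF v(2,1) o'] by blast
qed

lemma main_R: "sub_gea (Vf :: 'h sform set) oplus_bar zero_form Rf"
  unfolding sub_gea_def Rf_def using zero_Vf zero_reg core_R by blast

lemma main_S: "sub_gea (Vf :: 'h sform set) oplus_bar zero_form Sf"
  unfolding sub_gea_def Sf_def using zero_Vf zero_sing core_S by blast

end

theorem theorem4p20:
  assumes "infinite_dimensional (UNIV :: 'h::chilbert set)"
  shows "sub_gea (Vf :: 'h sform set) oplus_bar zero_form Rf
       \<and> sub_gea (Vf :: 'h sform set) oplus_bar zero_form Sf"
  using main_R[OF assms] main_S[OF assms] by blast


end
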